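(* Consider a bipartite system $A|B$ of $N=N_A+N_B$ modes for which the PPT criterion is necessary and sufficient for separability of covariance matrices, i.e. a covariance matrix $\gamma'$ is separable w.r.t. $A|B$ iff its partially transposed matrix $\gamma'^{T_A}$ satisfies $\gamma'^{T_A}+i\sigma\ge0$ (equivalently all symplectic eigenvalues of $\gamma'^{T_A}$ are $\ge1$). Let $\gamma$ be the covariance matrix of a Gaussian $N$-mode state. (1) If for some entanglement witness $Z\in\mathcal{Z}_{A|B}(\mathbb{R}^{2N})$ one has $m:=\mathrm{tr}[Z\gamma]\in(0,1)$, then $E_{\mathcal N}(\gamma)\ge\ln\frac1m$. (2) In the two-mode case ($N_A=N_B=1$), if $Z_{\min}\in\mathcal{Z}_{A|B}(\mathbb{R}^4)$ attains the minimum $m_{\min}=\mathrm{tr}[Z_{\min}\gamma]=\min_{Z\in\mathcal{Z}_{A|B}(\mathbb{R}^4)}\mathrm{tr}[Z\gamma]$ and $m_{\min}\in(0,1)$, then $E_{\mathcal N}(\gamma)=\ln\frac1{m_{\min}}$.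
   Context: $\sigma=\bigoplus\begin{pmatrix}0&1\\-1&0\end{pmatrix}$. Covariance matrices: real symmetric $\gamma$ with $\gamma\ge0$, $\gamma\pm i\sigma\ge0$; $\Gamma(\mathbb{R}^{2M})$ is the set of $2M\times 2M$ ones. $\gamma$ is separable w.r.t. $A|B$ if $\gamma\ge\gamma_A\oplus\gamma_B$ with $\gamma_A\in\Gamma(\mathbb{R}^{2N_A})$, $\gamma_B\in\Gamma(\mathbb{R}^{2N_B})$; this set is $\Gamma_{A|B}(\mathbb{R}^{2N})$. $\mathcal{Z}_{A|B}(\mathbb{R}^{2N})=\{Z\text{ real symmetric}:\ \mathrm{tr}[\gamma Z]\ge1\ \forall\gamma\in\Gamma_{A|B}(\mathbb{R}^{2N})\}$. Partially transposed covariance matrix: $\gamma^{T_A}=(M_A\oplus\mathbb{1}_B)\gamma(M_A\oplus\mathbb{1}_B)$ with $M_A=\bigoplus_{i=1}^{N_A}\mathrm{diag}(1,-1)$. Symplectic eigenvalues of a positive real symmetric $2N\times2N$ matrix $X$ are the positive eigenvalues of $i\sigma X$. Logarithmic negativity of a covariance matrix: $E_{\mathcal N}(\gamma)=-\sum_i\min(\ln\gamma_i^{T_A},0)$, where $\gamma_i^{T_A}$ are the symplectic eigenvalues of $\gamma^{T_A}$ (this equals $\ln\|\rho^{T_A}\|_1$ for the Gaussian state $\rho$). The PPT hypothesis holds e.g. for $N_A=1$. *)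

theory Defs
  imports "Jordan_Normal_Form.Matrix" "Jordan_Normal_Form.Char_Poly"
    "HOL-Computational_Algebra.Polynomial"
begin

text \<open>Mode k occupies coordinates 2k and 2k+1
  (0-based), and in the bipartite system A|B the N_A modes of A come first.\<close>

definition mtrace :: "'a::comm_ring_1 mat \<Rightarrow> 'a" where
  "mtrace A = (\<Sum>i<dim_row A. A $$ (i, i))"

definition real_sym :: "nat \<Rightarrow> real mat \<Rightarrow> bool" where
  "real_sym n X \<longleftrightarrow> X \<in> carrier_mat n n \<and> transpose_mat X = X"

definition real_psd :: "nat \<Rightarrow> real mat \<Rightarrow> bool" where
  "real_psd n X \<longleftrightarrow> X \<in> carrier_mat n n \<and> (\<forall>v \<in> carrier_vec n. 0 \<le> v \<bullet> (X *\<^sub>v v))"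

definition cpx_psd :: "nat \<Rightarrow> complex mat \<Rightarrow> bool" where
  "cpx_psd n X \<longleftrightarrow> X \<in> carrier_mat n n
     \<and> (\<forall>i<n. \<forall>j<n. X $$ (j, i) = cnj (X $$ (i, j)))
     \<and> (\<forall>v \<in> carrier_vec n. Im (map_vec cnj v \<bullet> (X *\<^sub>v v)) = 0
                              \<and> 0 \<le> Re (map_vec cnj v \<bullet> (X *\<^sub>v v)))"

text \<open>The symplectic form sigma = direct sum of [[0,1],[-1,0]] on R^(2n).\<close>
definition sympl :: "nat \<Rightarrow> real mat" where
  "sympl n = mat (2*n) (2*n) (\<lambda>(i, j).
      if even i \<and> j = i + 1 then 1 else if odd i \<and> j + 1 = i then -1 else 0)"

definition cmat :: "real mat \<Rightarrow> complex mat" where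
  "cmat X = map_mat complex_of_real X"

definition plus_i_sigma :: "nat \<Rightarrow> real mat \<Rightarrow> complex mat" where
  "plus_i_sigma n X = cmat X + \<i> \<cdot>\<^sub>m cmat (sympl n)"

definition minus_i_sigma :: "nat \<Rightarrow> real mat \<Rightarrow> complex mat" where
  "minus_i_sigma n X = cmat X - \<i> \<cdot>\<^sub>m cmat (sympl n)"

definition cov_mats :: "nat \<Rightarrow> real mat set" where
  "cov_mats n = {g. real_sym (2*n) g \<and> real_psd (2*n) g
                    \<and> cpx_psd (2*n) (plus_i_sigma n g) \<and> cpx_psd (2*n) (minus_i_sigma n g)}"

definition dsum :: "real mat \<Rightarrow> real mat \<Rightarrow> real mat" where
  "dsum X Y = four_block_mat X (0\<^sub>m (dim_row X) (dim_col Y)) (0\<^sub>m (dim_row Y) (dim_col X)) Y"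

definition sep_cov_mats :: "nat \<Rightarrow> nat \<Rightarrow> real mat set" where
  "sep_cov_mats NA NB = {g. g \<in> cov_mats (NA + NB) \<and>
      (\<exists>gA \<in> cov_mats NA. \<exists>gB \<in> cov_mats NB. real_psd (2*(NA+NB)) (g - dsum gA gB))}"

definition witnesses :: "nat \<Rightarrow> nat \<Rightarrow> real mat set" where
  "witnesses NA NB = {Z. real_sym (2*(NA+NB)) Z \<and>
      (\<forall>g \<in> sep_cov_mats NA NB. 1 \<le> mtrace (g * Z))}"

definition pt_mat :: "nat \<Rightarrow> nat \<Rightarrow> real mat" where
  "pt_mat NA NB = mat (2*(NA+NB)) (2*(NA+NB)) (\<lambda>(i, j).
      if i = j then (if i < 2*NA \<and> odd i then -1 else 1) else 0)"

definition partial_transpose :: "nat \<Rightarrow> nat \<Rightarrow> real mat \<Rightarrow> real mat" where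
  "partial_transpose NA NB g = pt_mat NA NB * g * pt_mat NA NB"

text \<open>Symplectic eigenvalues of X: positive eigenvalues of i sigma X, counted with
  algebraic multiplicity. The log-negativity sums over the distinct positive real
  eigenvalues weighted by their multiplicity as roots of the characteristic polynomial.\<close>
definition i_sigma_mat :: "nat \<Rightarrow> real mat \<Rightarrow> complex mat" where
  "i_sigma_mat n X = \<i> \<cdot>\<^sub>m (cmat (sympl n) * cmat X)"

definition symp_eigs :: "nat \<Rightarrow> real mat \<Rightarrow> real set" where
  "symp_eigs n X = {r. 0 < r \<and> eigenvalue (i_sigma_mat n X) (complex_of_real r)}"

definition symp_mult :: "nat \<Rightarrow> real mat \<Rightarrow> real \<Rightarrow> nat" where
  "symp_mult n X r = order (complex_of_real r) (char_poly (i_sigma_mat n X))"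

definition log_neg :: "nat \<Rightarrow> nat \<Rightarrow> real mat \<Rightarrow> real" where
  "log_neg NA NB g = - (\<Sum>r \<in> symp_eigs (NA+NB) (partial_transpose NA NB g).
      real (symp_mult (NA+NB) (partial_transpose NA NB g) r) * min (ln r) 0)"

end

theory Submission
  imports Defs
begin

definition qform :: "nat \<Rightarrow> complex mat \<Rightarrow> complex vec \<Rightarrow> complex vec \<Rightarrow> complex" where
  "qform m H u v = (\<Sum>i<m. \<Sum>j<m. cnj (u$i) * H$$(i,j) * v$j)"

definition nrm2 :: "nat \<Rightarrow> complex vec \<Rightarrow> real" where
  "nrm2 m v = (\<Sum>i<m. (cmod (v$i))^2)"

definition herm :: "nat \<Rightarrow> complex mat \<Rightarrow> bool" where
  "herm m H \<longleftrightarrow> H \<in> carrier_mat m m \<and> (\<forall>i<m. \<forall>j<m. H $$ (j, i) = cnj (H $$ (i, j)))"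

lemma qform_alt: assumes "H \<in> carrier_mat m m" "w \<in> carrier_vec m"
  shows "qform m H u w = (\<Sum>i<m. cnj (u$i) * (H *\<^sub>v w)$i)"
  using assms unfolding qform_def
  by (auto simp: scalar_prod_def row_def sum_distrib_left mult.assoc lessThan_atLeast0 intro!: sum.cong)

lemma qf_link: assumes "H \<in> carrier_mat m m" "v \<in> carrier_vec m"
  shows "map_vec cnj v \<bullet> (H *\<^sub>v v) = qform m H v v"
  using assms by (simp add: qform_alt scalar_prod_def lessThan_atLeast0)

lemma qform_add: assumes "A \<in> carrier_mat m m" "B \<in> carrier_mat m m"
  shows "qform m (A + B) u v = qform m A u v + qform m B u v"
  using assms unfolding qform_def
  by (simp add: sum.distrib[symmetric] algebra_simps)

lemma qform_minus: assumes "A \<in> carrier_mat m m" "B \<in> carrier_mat m m"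
  shows "qform m (A - B) u v = qform m A u v - qform m B u v"
  using assms unfolding qform_def
  by (simp add: sum_subtractf[symmetric] algebra_simps)

lemma qform_smult: assumes "A \<in> carrier_mat m m"
  shows "qform m (c \<cdot>\<^sub>m A) u v = c * qform m A u v"
  using assms unfolding qform_def
  by (simp add: sum_distrib_left algebra_simps)

lemma qform_expand: assumes "u \<in> carrier_vec m" "w \<in> carrier_vec m"
  shows "qform m H (u + complex_of_real s \<cdot>\<^sub>v w) (u + complex_of_real s \<cdot>\<^sub>v w) =
    qform m H u u + complex_of_real s * (qform m H u w + qform m H w u) + complex_of_real (s^2) * qform m H w w"
proof -
  let ?s = "complex_of_real s"
  have t: "cnj ((u + ?s \<cdot>\<^sub>v w)$i) * H$$(i,j) * (u + ?s \<cdot>\<^sub>v w)$j =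
     cnj (u$i) * H$$(i,j) * u$j + ?s * (cnj (u$i) * H$$(i,j) * w$j + cnj (w$i) * H$$(i,j) * u$j)
     + complex_of_real (s^2) * (cnj (w$i) * H$$(i,j) * w$j)" if "i < m" "j < m" for i j
    using that assms by (simp add: algebra_simps power2_eq_square)
  have "qform m H (u + ?s \<cdot>\<^sub>v w) (u + ?s \<cdot>\<^sub>v w) = (\<Sum>i<m. \<Sum>j<m. 
     cnj (u$i) * H$$(i,j) * u$j + ?s * (cnj (u$i) * H$$(i,j) * w$j + cnj (w$i) * H$$(i,j) * u$j)
     + complex_of_real (s^2) * (cnj (w$i) * H$$(i,j) * w$j))"
    unfolding qform_def by (intro sum.cong refl) (simp add: t)
  also have "\<dots> = qform m H u u + ?s * (qform m H u w + qform m H w u) + complex_of_real (s^2) * qform m H w w"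
    unfolding qform_def by (simp add: sum.distrib sum_distrib_left distrib_left)
  finally show ?thesis .
qed

lemma hermD: "herm m H \<Longrightarrow> i < m \<Longrightarrow> j < m \<Longrightarrow> H $$ (j, i) = cnj (H $$ (i, j))"
  unfolding herm_def by blast

lemma hermC: "herm m H \<Longrightarrow> H \<in> carrier_mat m m"
  unfolding herm_def by blast

lemma herm_swap: assumes "herm m H"
  shows "qform m H v u = cnj (qform m H u v)"
proof -
  have "qform m H v u = (\<Sum>i<m. \<Sum>j<m. cnj (v$i) * H$$(i,j) * u$j)" by (simp add: qform_def)
  also have "\<dots> = (\<Sum>j<m. \<Sum>i<m. cnj (v$i) * H$$(i,j) * u$j)" by (rule sum.swap)
  also have "\<dots> = (\<Sum>j<m. \<Sum>i<m. cnj (cnj (u$j) * H$$(j,i) * v$i))"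
  proof (intro sum.cong refl)
    fix i j assume "i \<in> {..<m}" "j \<in> {..<m}"
    then have "H $$ (j, i) = cnj (H $$ (i, j))" using assms unfolding herm_def by blast
    then show "cnj (v$i) * H$$(i,j) * u$j = cnj (cnj (u$j) * H$$(j,i) * v$i)"
      by (simp add: mult.commute mult.left_commute)
  qed
  also have "\<dots> = cnj (qform m H u v)" by (simp add: qform_def)
  finally show ?thesis .
qed

lemma herm_real: assumes "herm m H" shows "Im (qform m H v v) = 0"
proof -
  have "qform m H v v = cnj (qform m H v v)" by (rule herm_swap[OF assms])
  then have "Im (qform m H v v) = Im (cnj (qform m H v v))" by (rule arg_cong)
  then show ?thesis by simp
qed

lemma cpx_psd_iff: "cpx_psd m H \<longleftrightarrow> herm m H \<and> (\<forall>v\<in>carrier_vec m. 0 \<le> Re (qform m H v v))"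
proof
  assume a: "cpx_psd m H"
  then have h: "herm m H" unfolding cpx_psd_def herm_def by blast
  show "herm m H \<and> (\<forall>v\<in>carrier_vec m. 0 \<le> Re (qform m H v v))"
  proof (intro conjI ballI)
    show "herm m H" by (rule h)
    fix v :: "complex vec" assume v: "v \<in> carrier_vec m"
    have c: "H \<in> carrier_mat m m" by (rule hermC[OF h])
    have "0 \<le> Re (map_vec cnj v \<bullet> (H *\<^sub>v v))" using a v unfolding cpx_psd_def by blast
    then show "0 \<le> Re (qform m H v v)" using qf_link[OF c v] by simp
  qed
next
  assume a: "herm m H \<and> (\<forall>v\<in>carrier_vec m. 0 \<le> Re (qform m H v v))"
  then have h: "herm m H" by blast
  then have c: "H \<in> carrier_mat m m" by (rule hermC)
  have "\<forall>i<m. \<forall>j<m. H $$ (j, i) = cnj (H $$ (i, j))" using hermD[OF h] by blast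
  moreover have "\<forall>v \<in> carrier_vec m. Im (map_vec cnj v \<bullet> (H *\<^sub>v v)) = 0
                              \<and> 0 \<le> Re (map_vec cnj v \<bullet> (H *\<^sub>v v))"
    using a herm_real[OF h] qf_link[OF c] by simp
  ultimately show "cpx_psd m H" unfolding cpx_psd_def using c by blast
qed

lemma herm_add: assumes "herm m A" "herm m B" shows "herm m (A + B)"
  unfolding herm_def
proof (intro conjI allI impI)
  show "A + B \<in> carrier_mat m m" using hermC[OF assms(1)] hermC[OF assms(2)] by auto
  fix i j assume ij: "i < m" "j < m"
  then show "(A + B) $$ (j, i) = cnj ((A + B) $$ (i, j))" using hermC[OF assms(1)] hermC[OF assms(2)]
    hermD[OF assms(1) ij] hermD[OF assms(2) ij] by simp
qed

lemma herm_smult: assumes "herm m A" shows "herm m (complex_of_real c \<cdot>\<^sub>m A)"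
  unfolding herm_def
proof (intro conjI allI impI)
  show "complex_of_real c \<cdot>\<^sub>m A \<in> carrier_mat m m" using hermC[OF assms] by auto
  fix i j assume ij: "i < m" "j < m"
  then show "(complex_of_real c \<cdot>\<^sub>m A) $$ (j, i) = cnj ((complex_of_real c \<cdot>\<^sub>m A) $$ (i, j))" 
    using hermC[OF assms] hermD[OF assms ij] by simp
qed

lemma nrm2_comp: assumes "i < m" shows "(cmod (v$i))^2 \<le> nrm2 m v"
  unfolding nrm2_def using assms by (intro member_le_sum) auto

lemma nrm2_nonneg: "0 \<le> nrm2 m v" unfolding nrm2_def by (intro sum_nonneg) auto

lemma nrm2_prod: assumes "i < m" "j < m" shows "cmod (v$i) * cmod (v$j) \<le> nrm2 m v"
proof -
  have "cmod (v$i) * cmod (v$j) \<le> max ((cmod (v$i))^2) ((cmod (v$j))^2)"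
  proof (cases "cmod (v$i) \<le> cmod (v$j)")
    case True
    then have "cmod (v$i) * cmod (v$j) \<le> cmod (v$j) * cmod (v$j)" by (intro mult_right_mono) auto
    then show ?thesis by (simp add: power2_eq_square)
  next
    case False
    then have "cmod (v$i) * cmod (v$j) \<le> cmod (v$i) * cmod (v$i)" by (intro mult_left_mono) auto
    then show ?thesis by (simp add: power2_eq_square)
  qed
  also have "\<dots> \<le> nrm2 m v" using nrm2_comp[OF assms(1)] nrm2_comp[OF assms(2)] by simp
  finally show ?thesis .
qed

definition msum :: "nat \<Rightarrow> complex mat \<Rightarrow> real" where
  "msum m K = (\<Sum>i<m. \<Sum>j<m. cmod (K$$(i,j)))"

lemma msum_nonneg: "0 \<le> msum m K" unfolding msum_def by (intro sum_nonneg) auto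

lemma qform_bound: "cmod (qform m K v v) \<le> msum m K * nrm2 m v"
proof -
  have "cmod (qform m K v v) \<le> (\<Sum>i<m. \<Sum>j<m. cmod (cnj (v$i) * K$$(i,j) * v$j))"
    unfolding qform_def by (rule order.trans[OF norm_sum sum_mono[OF norm_sum]])
  also have "\<dots> \<le> (\<Sum>i<m. \<Sum>j<m. cmod (K$$(i,j)) * nrm2 m v)"
  proof (intro sum_mono)
    fix i j assume "i \<in> {..<m}" "j \<in> {..<m}"
    then have "cmod (v$i) * cmod (v$j) \<le> nrm2 m v" by (intro nrm2_prod) auto
    then have "cmod (K$$(i,j)) * (cmod (v$i) * cmod (v$j)) \<le> cmod (K$$(i,j)) * nrm2 m v"
      by (intro mult_left_mono) auto
    then show "cmod (cnj (v$i) * K$$(i,j) * v$j) \<le> cmod (K$$(i,j)) * nrm2 m v"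
      by (simp add: norm_mult algebra_simps)
  qed
  also have "\<dots> = msum m K * nrm2 m v" unfolding msum_def by (simp add: sum_distrib_right)
  finally show ?thesis .
qed

lemma mv_index: assumes "B \<in> carrier_mat m m" "v \<in> carrier_vec m" "i < m"
  shows "(B *\<^sub>v v)$i = (\<Sum>j<m. B$$(i,j) * v$j)"
  using assms by (simp add: scalar_prod_def lessThan_atLeast0)

lemma inv_bound: assumes "B \<in> carrier_mat m m" "v \<in> carrier_vec m"
  shows "cmod (\<Sum>i<m. cnj ((B *\<^sub>v v)$i) * v$i) \<le> msum m B * nrm2 m v"
proof -
  have "(\<Sum>i<m. cnj ((B *\<^sub>v v)$i) * v$i) = (\<Sum>i<m. \<Sum>j<m. cnj (B$$(i,j)) * cnj (v$j) * v$i)"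
  proof (rule sum.cong[OF refl])
    fix i assume "i \<in> {..<m}"
    then have "(B *\<^sub>v v)$i = (\<Sum>j<m. B$$(i,j) * v$j)" using mv_index[OF assms] by simp
    then show "cnj ((B *\<^sub>v v)$i) * v$i = (\<Sum>j<m. cnj (B$$(i,j)) * cnj (v$j) * v$i)"
      by (simp add: sum_distrib_right)
  qed
  then have "cmod (\<Sum>i<m. cnj ((B *\<^sub>v v)$i) * v$i) \<le> (\<Sum>i<m. \<Sum>j<m. cmod (cnj (B$$(i,j)) * cnj (v$j) * v$i))"
    by (simp only:) (rule order.trans[OF norm_sum sum_mono[OF norm_sum]])
  also have "\<dots> \<le> (\<Sum>i<m. \<Sum>j<m. cmod (B$$(i,j)) * nrm2 m v)"
  proof (intro sum_mono)
    fix i j assume "i \<in> {..<m}" "j \<in> {..<m}"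
    then have "cmod (v$j) * cmod (v$i) \<le> nrm2 m v" by (intro nrm2_prod) auto
    then have "cmod (B$$(i,j)) * (cmod (v$j) * cmod (v$i)) \<le> cmod (B$$(i,j)) * nrm2 m v"
      by (intro mult_left_mono) auto
    then show "cmod (cnj (B$$(i,j)) * cnj (v$j) * v$i) \<le> cmod (B$$(i,j)) * nrm2 m v"
      by (simp add: norm_mult algebra_simps)
  qed
  also have "\<dots> = msum m B * nrm2 m v" unfolding msum_def by (simp add: sum_distrib_right)
  finally show ?thesis .
qed

lemma nrm2_complex: "(\<Sum>i<m. cnj (v$i) * v$i) = complex_of_real (nrm2 m v)"
proof -
  have "cnj (v$i) * v$i = complex_of_real ((cmod (v$i))^2)" for i
    by (metis complex_norm_square mult.commute)
  then show ?thesis unfolding nrm2_def by simp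
qed

lemma nrm2_zero: assumes "v \<in> carrier_vec m" "nrm2 m v = 0" shows "v = 0\<^sub>v m"
proof (rule eq_vecI)
  fix i assume i: "i < dim_vec (0\<^sub>v m)"
  then have "(cmod (v$i))^2 \<le> 0" using nrm2_comp[of i m v] assms by simp
  then show "v $ i = 0\<^sub>v m $ i" using i by simp
qed (use assms in auto)

lemma quad_aux: fixes a b :: real
  assumes "\<forall>s. 0 \<le> 2*s*a + s^2*b" "0 \<le> b" shows "a = 0"
proof (rule ccontr)
  assume a: "a \<noteq> 0"
  define s where "s = -a/(b+1)"
  have b1: "b + 1 > 0" using assms by simp
  have sb: "s*(b+1) = -a" using b1 by (simp add: s_def)
  have "(2*s*a + s^2*b) * (b+1)^2 = 2*a*(s*(b+1))*(b+1) + (s*(b+1))^2*b"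
    by (simp add: algebra_simps power2_eq_square)
  also have "\<dots> = -(a^2 * (b+2))" unfolding sb by (simp add: algebra_simps power2_eq_square)
  also have "\<dots> < 0" using a assms by (simp add: mult_pos_pos)
  finally have "2*s*a + s^2*b < 0"
    using b1 by (metis mult_less_0_iff not_square_less_zero zero_less_power)
  then show False using assms(1) by (meson not_le)
qed

lemma psd_zero: assumes psd: "cpx_psd m H" and v: "v \<in> carrier_vec m" and z: "Re (qform m H v v) = 0"
  shows "H *\<^sub>v v = 0\<^sub>v m"
proof -
  have h: "herm m H" and pos: "\<And>x. x \<in> carrier_vec m \<Longrightarrow> 0 \<le> Re (qform m H x x)"
    using psd unfolding cpx_psd_iff by auto
  have c: "H \<in> carrier_mat m m" by (rule hermC[OF h])
  have key: "Re (qform m H u v) = 0" if u: "u \<in> carrier_vec m" for u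
  proof (rule quad_aux)
    show "0 \<le> Re (qform m H u u)" by (rule pos[OF u])
    show "\<forall>s. 0 \<le> 2 * s * Re (qform m H u v) + s\<^sup>2 * Re (qform m H u u)"
    proof
      fix s :: real
      have "0 \<le> Re (qform m H (v + complex_of_real s \<cdot>\<^sub>v u) (v + complex_of_real s \<cdot>\<^sub>v u))"
        using u v by (intro pos) auto
      also have "\<dots> = Re (qform m H v v) + s * (Re (qform m H v u) + Re (qform m H u v)) + s^2 * Re (qform m H u u)"
        unfolding qform_expand[OF v u] by simp
      also have "Re (qform m H v u) = Re (qform m H u v)" using herm_swap[OF h, of v u] by simp
      finally show "0 \<le> 2 * s * Re (qform m H u v) + s\<^sup>2 * Re (qform m H u u)" using z by simp
    qed
  qed
  let ?u = "H *\<^sub>v v"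
  have u: "?u \<in> carrier_vec m" using c v by auto
  have "qform m H ?u v = (\<Sum>i<m. cnj (?u$i) * ?u$i)" by (rule qform_alt[OF c v])
  also have "\<dots> = complex_of_real (nrm2 m ?u)" by (rule nrm2_complex)
  finally have "nrm2 m ?u = 0" using key[OF u] by simp
  then show ?thesis by (rule nrm2_zero[OF u])
qed

lemma KL: assumes psd: "cpx_psd m H" and hK: "herm m K" and B: "B \<in> carrier_mat m m"
  and HB: "H * B = 1\<^sub>m m"
  shows "\<exists>\<delta>>0. \<forall>d. 0 \<le> d \<and> d \<le> \<delta> \<longrightarrow> cpx_psd m (H + complex_of_real d \<cdot>\<^sub>m K)"
proof -
  have h: "herm m H" and pos: "\<And>x. x \<in> carrier_vec m \<Longrightarrow> 0 \<le> Re (qform m H x x)"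
    using psd unfolding cpx_psd_iff by auto
  have c: "H \<in> carrier_mat m m" by (rule hermC[OF h])
  have cK: "K \<in> carrier_mat m m" by (rule hermC[OF hK])
  define C1 where "C1 = msum m B + 1"
  define CK where "CK = msum m K + 1"
  have C1: "C1 \<ge> 1" and CK: "CK \<ge> 1" unfolding C1_def CK_def using msum_nonneg by auto
  have lower: "nrm2 m v / C1 \<le> Re (qform m H v v)" if v: "v \<in> carrier_vec m" for v
  proof -
    define w where "w = B *\<^sub>v v"
    have w: "w \<in> carrier_vec m" using B v by (simp add: w_def)
    have Hw: "H *\<^sub>v w = v" unfolding w_def
      by (metis B HB assoc_mult_mat_vec c one_mult_mat_vec v)
    have q1: "qform m H v w = complex_of_real (nrm2 m v)"
      using qform_alt[OF c w, of v] nrm2_complex[where m=m and v=v] Hw by simp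
    have q2: "qform m H w v = complex_of_real (nrm2 m v)"
      using herm_swap[OF h, of w v] q1 by simp
    have q3: "Re (qform m H w w) \<le> msum m B * nrm2 m v"
    proof -
      have "qform m H w w = (\<Sum>i<m. cnj (w$i) * v$i)" using qform_alt[OF c w, of w] Hw by simp
      then have "cmod (qform m H w w) \<le> msum m B * nrm2 m v" using inv_bound[OF B v] unfolding w_def by simp
      then show ?thesis using complex_Re_le_cmod order_trans by blast
    qed
    define s where "s = - 1 / C1"
    have "0 \<le> Re (qform m H (v + complex_of_real s \<cdot>\<^sub>v w) (v + complex_of_real s \<cdot>\<^sub>v w))"
      using v w by (intro pos) auto
    also have "\<dots> = Re (qform m H v v) - 2 * nrm2 m v / C1 + Re (qform m H w w) / C1^2"
      unfolding qform_expand[OF v w] q1 q2 s_def by (simp add: power2_eq_square)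
    also have "\<dots> \<le> Re (qform m H v v) - 2 * nrm2 m v / C1 + C1 * nrm2 m v / C1^2"
    proof -
      have "Re (qform m H w w) \<le> C1 * nrm2 m v"
        using q3 nrm2_nonneg[of m v] unfolding C1_def by (simp add: distrib_right)
      then show ?thesis by (simp add: divide_right_mono)
    qed
    also have "\<dots> = Re (qform m H v v) - nrm2 m v / C1"
      using C1 by (simp add: power2_eq_square field_simps)
    finally show ?thesis by simp
  qed
  define \<delta> where "\<delta> = 1 / (C1 * CK)"
  have dpos: "\<delta> > 0" unfolding \<delta>_def using C1 CK by simp
  have "cpx_psd m (H + complex_of_real d \<cdot>\<^sub>m K)" if d: "0 \<le> d" "d \<le> \<delta>" for d
    unfolding cpx_psd_iff
  proof (intro conjI ballI)
    show "herm m (H + complex_of_real d \<cdot>\<^sub>m K)" by (intro herm_add herm_smult h hK)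
    fix v :: "complex vec" assume v: "v \<in> carrier_vec m"
    have "Re (qform m (H + complex_of_real d \<cdot>\<^sub>m K) v v) = Re (qform m H v v) + d * Re (qform m K v v)"
      using c cK by (simp add: qform_add qform_smult)
    moreover have "- (d * Re (qform m K v v)) \<le> nrm2 m v / C1"
    proof -
      have "- (d * Re (qform m K v v)) \<le> d * cmod (qform m K v v)"
      proof -
        have "- Re (qform m K v v) \<le> cmod (qform m K v v)" using abs_Re_le_cmod[of "qform m K v v"] by linarith
        then have "d * (- Re (qform m K v v)) \<le> d * cmod (qform m K v v)" using d by (intro mult_left_mono) auto
        then show ?thesis by simp
      qed
      also have "\<dots> \<le> d * (msum m K * nrm2 m v)" using d qform_bound by (simp add: mult_left_mono)
      also have "\<dots> \<le> \<delta> * (CK * nrm2 m v)"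
        apply (rule mult_mono) using d nrm2_nonneg[of m v] msum_nonneg[of m K] by (auto simp: CK_def distrib_right)
      also have "\<dots> = nrm2 m v / C1" unfolding \<delta>_def using CK by simp
      finally show ?thesis .
    qed
    ultimately show "0 \<le> Re (qform m (H + complex_of_real d \<cdot>\<^sub>m K) v v)" using lower[OF v] by simp
  qed
  then show ?thesis using dpos by blast
qed

lemma HL:
  assumes psd0: "cpx_psd m H0" and hK: "herm m K" and c: "0 < c"
  and ns: "\<And>t v. 0 \<le> t \<Longrightarrow> t < c \<Longrightarrow> v \<in> carrier_vec m \<Longrightarrow>
              (H0 + complex_of_real t \<cdot>\<^sub>m K) *\<^sub>v v = 0\<^sub>v m \<Longrightarrow> v = 0\<^sub>v m"
  shows "cpx_psd m (H0 + complex_of_real c \<cdot>\<^sub>m K)"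
proof -
  have h0: "herm m H0" using psd0 unfolding cpx_psd_iff by auto
  have c0: "H0 \<in> carrier_mat m m" by (rule hermC[OF h0])
  have cK: "K \<in> carrier_mat m m" by (rule hermC[OF hK])
  define Ht where "Ht t = H0 + complex_of_real t \<cdot>\<^sub>m K" for t
  define \<alpha> where "\<alpha> v = Re (qform m H0 v v)" for v
  define \<beta> where "\<beta> v = Re (qform m K v v)" for v
  have qt: "Re (qform m (Ht t) v v) = \<alpha> v + t * \<beta> v" for t v
    unfolding Ht_def \<alpha>_def \<beta>_def using c0 cK by (simp add: qform_add qform_smult)
  have ht: "herm m (Ht t)" for t unfolding Ht_def by (intro herm_add herm_smult h0 hK)
  have psd_iff: "cpx_psd m (Ht t) \<longleftrightarrow> (\<forall>v\<in>carrier_vec m. 0 \<le> \<alpha> v + t * \<beta> v)" for t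
    unfolding cpx_psd_iff qt using ht by auto
  have a0: "\<And>v. v \<in> carrier_vec m \<Longrightarrow> 0 \<le> \<alpha> v" using psd0 unfolding cpx_psd_iff \<alpha>_def by auto
  define S where "S = {t. 0 \<le> t \<and> t \<le> c \<and> cpx_psd m (Ht t)}"
  have S0: "0 \<in> S" unfolding S_def psd_iff using c a0 by auto
  have bdd: "bdd_above S" unfolding S_def by (rule bdd_aboveI[of _ c]) auto
  define T where "T = Sup S"
  have T0: "0 \<le> T" unfolding T_def using S0 bdd by (rule cSup_upper)
  have Tc: "T \<le> c" unfolding T_def using S0 by (intro cSup_least) (auto simp: S_def)
  have psdT: "cpx_psd m (Ht T)" unfolding psd_iff
  proof
    fix v :: "complex vec" assume v: "v \<in> carrier_vec m"
    show "0 \<le> \<alpha> v + T * \<beta> v"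
    proof (cases "0 \<le> \<beta> v")
      case True then show ?thesis using a0[OF v] T0 by simp
    next
      case False
      have "t \<le> \<alpha> v / (- \<beta> v)" if "t \<in> S" for t
      proof -
        have "0 \<le> \<alpha> v + t * \<beta> v" using that v unfolding S_def psd_iff by auto
        then show ?thesis using False by (simp add: field_simps)
      qed
      then have "T \<le> \<alpha> v / (- \<beta> v)" unfolding T_def using S0 by (intro cSup_least) auto
      then show ?thesis using False by (simp add: field_simps)
    qed
  qed
  show ?thesis
  proof (cases "T = c")
    case True
    then show ?thesis using psdT unfolding Ht_def by simp
  next
    case False
    then have Tlc: "T < c" using Tc by simp
    have cT: "Ht T \<in> carrier_mat m m" by (rule hermC[OF ht])
    have "det (Ht T) \<noteq> 0"
    proof
      assume "det (Ht T) = 0"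
      then obtain v where "v \<in> carrier_vec m" "v \<noteq> 0\<^sub>v m" "Ht T *\<^sub>v v = 0\<^sub>v m"
        using det_0_iff_vec_prod_zero[OF cT] by auto
      then show False using ns[OF T0 Tlc] unfolding Ht_def by auto
    qed
    from det_non_zero_imp_unit[OF cT this, unfolded Units_def, of "()"]
    obtain B where B: "B \<in> carrier_mat m m" and HB: "Ht T * B = 1\<^sub>m m"
      by (auto simp: ring_mat_def)
    from KL[OF psdT hK B HB] obtain \<delta> where dpos: "\<delta> > 0"
      and dk: "\<And>d. 0 \<le> d \<and> d \<le> \<delta> \<Longrightarrow> cpx_psd m (Ht T + complex_of_real d \<cdot>\<^sub>m K)" by auto
    define d where "d = min \<delta> (c - T)"
    have d: "0 < d" "d \<le> \<delta>" "T + d \<le> c" unfolding d_def using dpos Tlc by auto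
    have "cpx_psd m (Ht T + complex_of_real d \<cdot>\<^sub>m K)" using dk d by auto
    then have "\<forall>v\<in>carrier_vec m. 0 \<le> \<alpha> v + (T + d) * \<beta> v"
      unfolding cpx_psd_iff using cT cK by (simp add: qform_add qform_smult qt distrib_right add.assoc \<beta>_def)
    then have "T + d \<in> S" unfolding S_def psd_iff using T0 d by auto
    then have "T + d \<le> T" unfolding T_def using bdd by (rule cSup_upper)
    then show ?thesis using d by simp
  qed
qed

lemma sum_single: assumes "k < (m::nat)" shows "(\<Sum>j<m. if j = k then f j else (0::'a::comm_monoid_add)) = f k"
  proof -
  have "(\<Sum>j<m. if j = k then f j else (0::'a)) = (\<Sum>j\<in>{..<m}. if j = k then f k else 0)"
    by (intro sum.cong) auto
  also have "\<dots> = f k" using assms by (subst sum.delta) auto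
  finally show ?thesis .
qed

lemma sympl_carrier[simp]: "sympl n \<in> carrier_mat (2*n) (2*n)"
  unfolding sympl_def by simp

lemma sympl_dims[simp]: "dim_row (sympl n) = 2*n" "dim_col (sympl n) = 2*n"
  unfolding sympl_def by auto

lemma sympl_entry: "i < 2*n \<Longrightarrow> j < 2*n \<Longrightarrow> sympl n $$ (i,j) =
   (if even i \<and> j = i + 1 then 1 else if odd i \<and> j + 1 = i then -1 else 0)"
  unfolding sympl_def by simp

lemma cmat_carrier[simp]: "X \<in> carrier_mat a b \<Longrightarrow> cmat X \<in> carrier_mat a b"
  unfolding cmat_def by simp

lemma cmat_index[simp]: "i < dim_row X \<Longrightarrow> j < dim_col X \<Longrightarrow> cmat X $$ (i,j) = complex_of_real (X $$ (i,j))"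
  unfolding cmat_def by simp

lemma cmat_dims[simp]: "dim_row (cmat X) = dim_row X" "dim_col (cmat X) = dim_col X"
  unfolding cmat_def by auto

lemma S_vec: assumes y: "y \<in> carrier_vec (2*n)" and l: "l < 2*n"
  shows "(cmat (sympl n) *\<^sub>v y) $ l = (if even l then y $ (l+1) else - y $ (l - 1))"
proof -
  have c: "cmat (sympl n) \<in> carrier_mat (2*n) (2*n)" by simp
  have e: "(cmat (sympl n) *\<^sub>v y) $ l = (\<Sum>j<2*n. cmat (sympl n) $$ (l,j) * y$j)"
    by (rule mv_index[OF c y l])
  show ?thesis
  proof (cases "even l")
    case True
    then have l1: "l + 1 < 2*n" using l by presburger
    have "(\<Sum>j<2*n. cmat (sympl n) $$ (l,j) * y$j) = (\<Sum>j<2*n. if j = l+1 then y$j else 0)"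
      using True l by (intro sum.cong refl) (auto simp: sympl_entry)
    then show ?thesis using e True l1 by (simp add: sum_single)
  next
    case False
    then have l1: "l - 1 < 2*n" using l by simp
    have "(\<Sum>j<2*n. cmat (sympl n) $$ (l,j) * y$j) = (\<Sum>j<2*n. if j = l-1 then - y$j else 0)"
      using False l by (intro sum.cong refl) (auto simp: sympl_entry)
    then show ?thesis using e False l1 by (simp add: sum_single)
  qed
qed

lemma SS_vec: assumes y: "y \<in> carrier_vec (2*n)" and l: "l < 2*n"
  shows "(cmat (sympl n) *\<^sub>v (cmat (sympl n) *\<^sub>v y)) $ l = - y $ l"
proof -
  have c: "cmat (sympl n) *\<^sub>v y \<in> carrier_vec (2*n)" by (rule mult_mat_vec_carrier[OF cmat_carrier[OF sympl_carrier] y])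
  show ?thesis
  proof (cases "even l")
    case True
    then obtain k where k: "l = 2*k" by (rule evenE)
    have l1: "2*k + 1 < 2*n" using l k by simp
    have a: "(cmat (sympl n) *\<^sub>v (cmat (sympl n) *\<^sub>v y)) $ l = (cmat (sympl n) *\<^sub>v y) $ (2*k+1)"
      using S_vec[OF c l] k by simp
    have b: "(cmat (sympl n) *\<^sub>v y) $ (2*k+1) = - y $ (2*k)"
      using S_vec[OF y l1] by simp
    show ?thesis using a b k by simp
  next
    case False
    then obtain k where k: "l = 2*k + 1" by (rule oddE)
    have l1: "2*k < 2*n" using l k by simp
    have a: "(cmat (sympl n) *\<^sub>v (cmat (sympl n) *\<^sub>v y)) $ l = - (cmat (sympl n) *\<^sub>v y) $ (2*k)"
      using S_vec[OF c l] k by simp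
    have b: "(cmat (sympl n) *\<^sub>v y) $ (2*k) = y $ (2*k+1)"
      using S_vec[OF y l1] by simp
    show ?thesis using a b k by simp
  qed
qed

definition Kmat :: "nat \<Rightarrow> complex mat" where
  "Kmat n = \<i> \<cdot>\<^sub>m cmat (sympl n)"

lemma K_carrier[simp]: "Kmat n \<in> carrier_mat (2*n) (2*n)" unfolding Kmat_def by simp

lemma K_dims[simp]: "dim_row (Kmat n) = 2*n" "dim_col (Kmat n) = 2*n" unfolding Kmat_def by auto

lemma smult_mv_index: assumes "A \<in> carrier_mat m m" "v \<in> carrier_vec m" "l < m"
  shows "((c \<cdot>\<^sub>m A) *\<^sub>v v) $ l = c * (A *\<^sub>v v) $ l"
proof -
  have "c \<cdot>\<^sub>m A \<in> carrier_mat m m" using assms by simp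
  from mv_index[OF this assms(2,3)] mv_index[OF assms]
  show ?thesis using assms by (simp add: sum_distrib_left mult.assoc)
qed

lemma K_vec: assumes y: "y \<in> carrier_vec (2*n)" and l: "l < 2*n"
  shows "(Kmat n *\<^sub>v y) $ l = \<i> * (cmat (sympl n) *\<^sub>v y) $ l"
  unfolding Kmat_def by (rule smult_mv_index[OF _ y l]) simp

lemma herm_K: "herm (2*n) (Kmat n)"
  unfolding herm_def
proof (intro conjI allI impI)
  show "Kmat n \<in> carrier_mat (2*n) (2*n)" by simp
  fix i j assume ij: "i < 2*n" "j < 2*n"
  then show "Kmat n $$ (j, i) = cnj (Kmat n $$ (i, j))"
    unfolding Kmat_def using ij by (auto simp: sympl_entry)
qed

lemma KK_vec: assumes y: "y \<in> carrier_vec (2*n)" and l: "l < 2*n"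
  shows "(Kmat n *\<^sub>v (Kmat n *\<^sub>v y)) $ l = y $ l"
proof -
  define z where "z = cmat (sympl n) *\<^sub>v y"
  have z: "z \<in> carrier_vec (2*n)" unfolding z_def by (rule mult_mat_vec_carrier[OF cmat_carrier[OF sympl_carrier] y])
  have e1: "Kmat n *\<^sub>v y = \<i> \<cdot>\<^sub>v z"
    by (rule eq_vecI) (use y K_vec[OF y] in \<open>auto simp: z_def\<close>)
  have iz: "\<i> \<cdot>\<^sub>v z \<in> carrier_vec (2*n)" using z by simp
  have 1: "(Kmat n *\<^sub>v (Kmat n *\<^sub>v y)) $ l = \<i> * (cmat (sympl n) *\<^sub>v (\<i> \<cdot>\<^sub>v z)) $ l"
    unfolding e1 by (rule K_vec[OF iz l])
  have 2: "cmat (sympl n) *\<^sub>v (\<i> \<cdot>\<^sub>v z) = \<i> \<cdot>\<^sub>v (cmat (sympl n) *\<^sub>v z)"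
    by (rule mult_mat_vec[OF cmat_carrier[OF sympl_carrier] z])
  have 3: "(\<i> \<cdot>\<^sub>v (cmat (sympl n) *\<^sub>v z)) $ l = \<i> * (cmat (sympl n) *\<^sub>v z) $ l"
    using l by simp
  have 4: "(cmat (sympl n) *\<^sub>v z) $ l = - y $ l" unfolding z_def by (rule SS_vec[OF y l])
  show ?thesis unfolding 1 2 3 4 by simp
qed

definition dd :: "nat \<Rightarrow> nat \<Rightarrow> real" where
  "dd NA i = (if i < 2*NA \<and> odd i then -1 else 1)"

lemma dd_sq[simp]: "dd NA i * dd NA i = 1" unfolding dd_def by simp

lemma pt_carrier[simp]: "pt_mat NA NB \<in> carrier_mat (2*(NA+NB)) (2*(NA+NB))"
  unfolding pt_mat_def by simp

lemma pt_index: "i < 2*(NA+NB) \<Longrightarrow> j < 2*(NA+NB) \<Longrightarrow> pt_mat NA NB $$ (i,j) = (if i = j then dd NA i else 0)"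
  unfolding pt_mat_def dd_def by simp

lemma mm_index: assumes "A \<in> carrier_mat m m" "B \<in> carrier_mat m m" "i < m" "j < m"
  shows "(A * B) $$ (i,j) = (\<Sum>k<m. A $$ (i,k) * B $$ (k,j))"
  using assms by (simp add: scalar_prod_def lessThan_atLeast0)

lemma ptg_index: assumes g: "g \<in> carrier_mat (2*(NA+NB)) (2*(NA+NB))"
  and i: "i < 2*(NA+NB)" and j: "j < 2*(NA+NB)"
  shows "partial_transpose NA NB g $$ (i,j) = dd NA i * g $$ (i,j) * dd NA j"
proof -
  let ?m = "2*(NA+NB)" and ?P = "pt_mat NA NB"
  have Pg: "?P * g \<in> carrier_mat ?m ?m" by (rule mult_carrier_mat[OF pt_carrier g])
  have a: "(?P * g) $$ (i,k) = dd NA i * g $$ (i,k)" if k: "k < ?m" for k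
  proof -
    have "(?P * g) $$ (i,k) = (\<Sum>l<?m. ?P $$ (i,l) * g $$ (l,k))" by (rule mm_index[OF pt_carrier g i k])
    also have "\<dots> = (\<Sum>l<?m. if l = i then dd NA i * g $$ (l,k) else 0)"
      using i by (intro sum.cong refl) (auto simp: pt_index)
    also have "\<dots> = dd NA i * g $$ (i,k)" using i by (simp add: sum_single)
    finally show ?thesis .
  qed
  have "partial_transpose NA NB g $$ (i,j) = (\<Sum>k<?m. (?P * g) $$ (i,k) * ?P $$ (k,j))"
    unfolding partial_transpose_def by (rule mm_index[OF Pg pt_carrier i j])
  also have "\<dots> = (\<Sum>k<?m. if k = j then dd NA i * g $$ (i,k) * dd NA j else 0)"
    using j by (intro sum.cong refl) (auto simp: pt_index a)
  also have "\<dots> = dd NA i * g $$ (i,j) * dd NA j" using j by (simp add: sum_single)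
  finally show ?thesis .
qed

lemma pt_carrier2[simp]: "g \<in> carrier_mat (2*(NA+NB)) (2*(NA+NB)) \<Longrightarrow>
   partial_transpose NA NB g \<in> carrier_mat (2*(NA+NB)) (2*(NA+NB))"
  unfolding partial_transpose_def by (rule mult_carrier_mat[OF mult_carrier_mat[OF pt_carrier] pt_carrier])

definition dv :: "nat \<Rightarrow> nat \<Rightarrow> complex vec \<Rightarrow> complex vec" where
  "dv NA m v = vec m (\<lambda>i. complex_of_real (dd NA i) * v $ i)"

lemma dv_carrier[simp]: "dv NA m v \<in> carrier_vec m" unfolding dv_def by simp

lemma dv_index[simp]: "i < m \<Longrightarrow> dv NA m v $ i = complex_of_real (dd NA i) * v $ i"
  unfolding dv_def by simp

lemma dv_zero: assumes v: "v \<in> carrier_vec m" and z: "dv NA m v = 0\<^sub>v m" shows "v = 0\<^sub>v m"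
proof (rule eq_vecI)
  fix i assume i: "i < dim_vec (0\<^sub>v m)"
  then have i': "i < m" by simp
  have "dv NA m v $ i = 0\<^sub>v m $ i" using z by simp
  then have "complex_of_real (dd NA i) * v $ i = 0" using i' by simp
  moreover have "dd NA i \<noteq> 0" unfolding dd_def by simp
  ultimately show "v $ i = 0\<^sub>v m $ i" using i by simp
qed (use v in auto)

lemma qform_pt: assumes Y: "Y \<in> carrier_mat (2*(NA+NB)) (2*(NA+NB))"
  shows "qform (2*(NA+NB)) (cmat (partial_transpose NA NB Y)) u u =
         qform (2*(NA+NB)) (cmat Y) (dv NA (2*(NA+NB)) u) (dv NA (2*(NA+NB)) u)"
  unfolding qform_def
proof (intro sum.cong refl)
  fix i j assume i: "i \<in> {..<2*(NA+NB)}" and j: "j \<in> {..<2*(NA+NB)}"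
  have c: "partial_transpose NA NB Y \<in> carrier_mat (2*(NA+NB)) (2*(NA+NB))" using Y by (rule pt_carrier2)
  show "cnj (u $ i) * cmat (partial_transpose NA NB Y) $$ (i, j) * u $ j =
        cnj (dv NA (2 * (NA + NB)) u $ i) * cmat Y $$ (i, j) * dv NA (2 * (NA + NB)) u $ j"
    using i j c Y by (simp add: ptg_index[OF Y])
qed

lemma real_sym_herm: assumes "real_sym m Y" shows "herm m (cmat Y)"
  unfolding herm_def
proof (intro conjI allI impI)
  have c: "Y \<in> carrier_mat m m" and t: "transpose_mat Y = Y" using assms real_sym_def by auto
  show "cmat Y \<in> carrier_mat m m" using c by simp
  fix i j assume ij: "i < m" "j < m"
  have "Y $$ (j,i) = Y $$ (i,j)" using t ij c by (metis carrier_matD index_transpose_mat(1))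
  then show "cmat Y $$ (j, i) = cnj (cmat Y $$ (i, j))" using ij c by simp
qed

lemma plus_K: "plus_i_sigma n Y = cmat Y + Kmat n" unfolding plus_i_sigma_def Kmat_def ..
lemma minus_K: "minus_i_sigma n Y = cmat Y - Kmat n" unfolding minus_i_sigma_def Kmat_def ..

lemma cov_carrier: "g \<in> cov_mats n \<Longrightarrow> g \<in> carrier_mat (2*n) (2*n)"
  unfolding cov_mats_def real_sym_def by auto

lemma cov_herm: "g \<in> cov_mats n \<Longrightarrow> herm (2*n) (cmat g)"
  unfolding cov_mats_def by (auto intro: real_sym_herm)

lemma cov_ineq: assumes g: "g \<in> cov_mats n" and v: "v \<in> carrier_vec (2*n)"
  shows "Re (qform (2*n) (Kmat n) v v) \<le> Re (qform (2*n) (cmat g) v v)"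
        "- Re (qform (2*n) (Kmat n) v v) \<le> Re (qform (2*n) (cmat g) v v)"
proof -
  have c: "cmat g \<in> carrier_mat (2*n) (2*n)" using cov_carrier[OF g] by simp
  have p: "cpx_psd (2*n) (cmat g + Kmat n)" and m: "cpx_psd (2*n) (cmat g - Kmat n)"
    using g unfolding cov_mats_def plus_K minus_K by auto
  from p v have "0 \<le> Re (qform (2*n) (cmat g + Kmat n) v v)" unfolding cpx_psd_iff by auto
  then show "- Re (qform (2*n) (Kmat n) v v) \<le> Re (qform (2*n) (cmat g) v v)"
    using c by (simp add: qform_add)
  from m v have "0 \<le> Re (qform (2*n) (cmat g - Kmat n) v v)" unfolding cpx_psd_iff by auto
  then show "Re (qform (2*n) (Kmat n) v v) \<le> Re (qform (2*n) (cmat g) v v)"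
    using c by (simp add: qform_minus)
qed

lemma cov_pd: assumes g: "g \<in> cov_mats n" and v: "v \<in> carrier_vec (2*n)" and nz: "v \<noteq> 0\<^sub>v (2*n)"
  shows "0 < Re (qform (2*n) (cmat g) v v)"
proof (rule ccontr)
  assume "\<not> ?thesis"
  then have z: "Re (qform (2*n) (cmat g) v v) \<le> 0" by simp
  have c: "cmat g \<in> carrier_mat (2*n) (2*n)" using cov_carrier[OF g] by simp
  have p: "cpx_psd (2*n) (cmat g + Kmat n)" and m: "cpx_psd (2*n) (cmat g - Kmat n)"
    using g unfolding cov_mats_def plus_K minus_K by auto
  note ci = cov_ineq[OF g v]
  have z1: "Re (qform (2*n) (cmat g + Kmat n) v v) = 0" using c ci z by (simp add: qform_add)
  have z2: "Re (qform (2*n) (cmat g - Kmat n) v v) = 0" using c ci z by (simp add: qform_minus)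
  have e1: "(cmat g + Kmat n) *\<^sub>v v = 0\<^sub>v (2*n)" by (rule psd_zero[OF p v z1])
  have e2: "(cmat g - Kmat n) *\<^sub>v v = 0\<^sub>v (2*n)" by (rule psd_zero[OF m v z2])
  have Kv: "(Kmat n *\<^sub>v v) $ l = 0" if l: "l < 2*n" for l
  proof -
    have h1: "(cmat g *\<^sub>v v) $ l + (Kmat n *\<^sub>v v) $ l = 0"
    proof -
      have "((cmat g + Kmat n) *\<^sub>v v) $ l = (cmat g *\<^sub>v v) $ l + (Kmat n *\<^sub>v v) $ l"
        using c v l by (simp add: add_mult_distrib_mat_vec[of _ "2*n" "2*n"])
      then show ?thesis using e1 l by simp
    qed
    have h2: "(cmat g *\<^sub>v v) $ l - (Kmat n *\<^sub>v v) $ l = 0"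
    proof -
      have "((cmat g - Kmat n) *\<^sub>v v) $ l = (cmat g *\<^sub>v v) $ l - (Kmat n *\<^sub>v v) $ l"
        using c v l by (simp add: minus_mult_distrib_mat_vec[of _ "2*n" "2*n"])
      then show ?thesis using e2 l by simp
    qed
    from h1 have "(cmat g *\<^sub>v v) $ l = - (Kmat n *\<^sub>v v) $ l" by (simp add: eq_neg_iff_add_eq_0)
    moreover from h2 have "(cmat g *\<^sub>v v) $ l = (Kmat n *\<^sub>v v) $ l" by simp
    ultimately show ?thesis by simp
  qed
  have Sv: "(cmat (sympl n) *\<^sub>v v) $ l = 0" if l: "l < 2*n" for l
    using Kv[OF l] K_vec[OF v l] by simp
  have "v $ l = 0" if l: "l < 2*n" for l
  proof -
    have "(cmat (sympl n) *\<^sub>v v) = 0\<^sub>v (2*n)"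
      by (rule eq_vecI) (use Sv in auto)
    then have "(cmat (sympl n) *\<^sub>v (cmat (sympl n) *\<^sub>v v)) $ l = 0"
      using l by (simp add: mult_mat_vec_carrier)
    then show ?thesis using SS_vec[OF v l] by simp
  qed
  then have "v = 0\<^sub>v (2*n)" by (intro eq_vecI) (use v in auto)
  then show False using nz by simp
qed

lemma pt_sym: assumes "real_sym (2*(NA+NB)) g" shows "real_sym (2*(NA+NB)) (partial_transpose NA NB g)"
proof -
  have c: "g \<in> carrier_mat (2*(NA+NB)) (2*(NA+NB))" and t: "transpose_mat g = g" using assms real_sym_def by auto
  have cx: "partial_transpose NA NB g \<in> carrier_mat (2*(NA+NB)) (2*(NA+NB))" using c by (rule pt_carrier2)
  have s: "g $$ (j,i) = g $$ (i,j)" if "i < 2*(NA+NB)" "j < 2*(NA+NB)" for i j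
    using t that c by (metis carrier_matD index_transpose_mat(1))
  have "transpose_mat (partial_transpose NA NB g) = partial_transpose NA NB g"
  proof (rule eq_matI)
    fix i j assume "i < dim_row (partial_transpose NA NB g)" "j < dim_col (partial_transpose NA NB g)"
    then have ij: "i < 2*(NA+NB)" "j < 2*(NA+NB)" using cx by auto
    then show "transpose_mat (partial_transpose NA NB g) $$ (i, j) = partial_transpose NA NB g $$ (i, j)"
      using cx ptg_index[OF c ij] ptg_index[OF c ij(2,1)] s[OF ij] by simp
  qed (use cx in auto)
  then show ?thesis using cx unfolding real_sym_def by simp
qed

context
  fixes NA NB :: nat and g :: "real mat"
  assumes cm: "g \<in> cov_mats (NA+NB)"
begin

abbreviation "mm \<equiv> 2*(NA+NB)"
abbreviation "XX \<equiv> partial_transpose NA NB g"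
abbreviation "KK \<equiv> Kmat (NA+NB)"

lemma g_carrier: "g \<in> carrier_mat mm mm" using cov_carrier[OF cm] .

lemma X_carrier: "XX \<in> carrier_mat mm mm" using g_carrier by (rule pt_carrier2)

lemma g_sym: "real_sym mm g" using cm unfolding cov_mats_def by blast

lemma X_herm: "herm mm (cmat XX)"
  by (rule real_sym_herm[OF pt_sym[OF g_sym]])

lemma X_q: "qform mm (cmat XX) u u = qform mm (cmat g) (dv NA mm u) (dv NA mm u)"
  by (rule qform_pt[OF g_carrier])

lemma G_nonneg: assumes v: "v \<in> carrier_vec mm" shows "0 \<le> Re (qform mm (cmat g) v v)"
  using cov_ineq[OF cm v] by linarith

lemma X_psd: "cpx_psd mm (cmat XX)"
  unfolding cpx_psd_iff using X_herm X_q G_nonneg by simp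

lemma X_pd: assumes v: "v \<in> carrier_vec mm" and nz: "v \<noteq> 0\<^sub>v mm"
  shows "0 < Re (qform mm (cmat XX) v v)"
proof -
  have "dv NA mm v \<noteq> 0\<^sub>v mm" using dv_zero[OF v] nz by blast
  then show ?thesis unfolding X_q using cov_pd[OF cm] by simp
qed

end

lemma ii: "\<i> * (a * \<i> * b) = - (a * b)"
proof -
  have "\<i> * (a * \<i> * b) = (\<i> * \<i>) * (a * b)" by (simp add: ac_simps)
  then show ?thesis by simp
qed

lemma cmat_mv_cnj: assumes X: "X \<in> carrier_mat m m" and v: "v \<in> carrier_vec m" and l: "l < m"
  shows "(cmat X *\<^sub>v map_vec cnj v) $ l = cnj ((cmat X *\<^sub>v v) $ l)"
proof -
  have c: "cmat X \<in> carrier_mat m m" using X by simp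
  have v': "map_vec cnj v \<in> carrier_vec m" using v by simp
  have "(\<Sum>j<m. cmat X $$ (l, j) * map_vec cnj v $ j) = (\<Sum>j<m. cnj (cmat X $$ (l, j) * v $ j))"
  proof (rule sum.cong[OF refl])
    fix j assume "j \<in> {..<m}"
    then show "cmat X $$ (l, j) * map_vec cnj v $ j = cnj (cmat X $$ (l, j) * v $ j)" using X v l by simp
  qed
  then show ?thesis unfolding mv_index[OF c v l] mv_index[OF c v' l] by simp
qed

lemma K_mv_cnj: assumes v: "v \<in> carrier_vec (2*n)" and l: "l < 2*n"
  shows "(Kmat n *\<^sub>v map_vec cnj v) $ l = - cnj ((Kmat n *\<^sub>v v) $ l)"
proof -
  have v': "map_vec cnj v \<in> carrier_vec (2*n)" using v by simp
  have S: "(cmat (sympl n) *\<^sub>v map_vec cnj v) $ l = cnj ((cmat (sympl n) *\<^sub>v v) $ l)"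
    by (rule cmat_mv_cnj[OF sympl_carrier v l])
  show ?thesis unfolding K_vec[OF v l] K_vec[OF v' l] S by simp
qed

lemma isig_vec: assumes X: "X \<in> carrier_mat (2*n) (2*n)" and v: "v \<in> carrier_vec (2*n)" and l: "l < 2*n"
  shows "(i_sigma_mat n X *\<^sub>v v) $ l = \<i> * (cmat (sympl n) *\<^sub>v (cmat X *\<^sub>v v)) $ l"
proof -
  have c: "cmat (sympl n) * cmat X \<in> carrier_mat (2*n) (2*n)"
    by (rule mult_carrier_mat[OF cmat_carrier[OF sympl_carrier] cmat_carrier[OF X]])
  have "(i_sigma_mat n X *\<^sub>v v) $ l = \<i> * ((cmat (sympl n) * cmat X) *\<^sub>v v) $ l"
    unfolding i_sigma_mat_def by (rule smult_mv_index[OF c v l])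
  also have "(cmat (sympl n) * cmat X) *\<^sub>v v = cmat (sympl n) *\<^sub>v (cmat X *\<^sub>v v)"
    by (rule assoc_mult_mat_vec[OF cmat_carrier[OF sympl_carrier] cmat_carrier[OF X] v])
  finally show ?thesis .
qed

lemma isig_carrier: "X \<in> carrier_mat (2*n) (2*n) \<Longrightarrow> i_sigma_mat n X \<in> carrier_mat (2*n) (2*n)"
  unfolding i_sigma_mat_def
  by (intro smult_carrier_mat mult_carrier_mat[OF cmat_carrier[OF sympl_carrier] cmat_carrier])

lemma K_as_S: assumes v: "v \<in> carrier_vec (2*n)"
  shows "Kmat n *\<^sub>v v = \<i> \<cdot>\<^sub>v (cmat (sympl n) *\<^sub>v v)"
  by (rule eq_vecI) (use v K_vec[OF v] in auto)

lemma EIG_bwd: assumes X: "X \<in> carrier_mat (2*n) (2*n)" and v: "v \<in> carrier_vec (2*n)"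
  and h: "\<And>l. l < 2*n \<Longrightarrow> (cmat X *\<^sub>v v) $ l = \<mu> * (Kmat n *\<^sub>v v) $ l"
  shows "i_sigma_mat n X *\<^sub>v v = \<mu> \<cdot>\<^sub>v v"
proof -
  have Sv: "cmat (sympl n) *\<^sub>v v \<in> carrier_vec (2*n)" by (rule mult_mat_vec_carrier[OF cmat_carrier[OF sympl_carrier] v])
  have y: "cmat X *\<^sub>v v = (\<mu> * \<i>) \<cdot>\<^sub>v (cmat (sympl n) *\<^sub>v v)"
  proof (rule eq_vecI)
    fix l assume "l < dim_vec ((\<mu> * \<i>) \<cdot>\<^sub>v (cmat (sympl n) *\<^sub>v v))"
    then have l: "l < 2*n" by simp
    show "(cmat X *\<^sub>v v) $ l = ((\<mu> * \<i>) \<cdot>\<^sub>v (cmat (sympl n) *\<^sub>v v)) $ l"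
      using h[OF l] K_vec[OF v l] l by simp
  qed (use X in simp)
  show ?thesis
  proof (rule eq_vecI)
    fix l assume "l < dim_vec (\<mu> \<cdot>\<^sub>v v)"
    then have l: "l < 2*n" using v by simp
    have "(i_sigma_mat n X *\<^sub>v v) $ l = \<i> * (cmat (sympl n) *\<^sub>v ((\<mu> * \<i>) \<cdot>\<^sub>v (cmat (sympl n) *\<^sub>v v))) $ l"
      unfolding isig_vec[OF X v l] y ..
    also have "cmat (sympl n) *\<^sub>v ((\<mu> * \<i>) \<cdot>\<^sub>v (cmat (sympl n) *\<^sub>v v)) = (\<mu> * \<i>) \<cdot>\<^sub>v (cmat (sympl n) *\<^sub>v (cmat (sympl n) *\<^sub>v v))"
      by (rule mult_mat_vec[OF cmat_carrier[OF sympl_carrier] Sv])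
    finally show "(i_sigma_mat n X *\<^sub>v v) $ l = (\<mu> \<cdot>\<^sub>v v) $ l"
      using SS_vec[OF v l] l v by (simp add: ii)
  qed (use X v in \<open>simp add: i_sigma_mat_def\<close>)
qed

lemma EIG_fwd: assumes X: "X \<in> carrier_mat (2*n) (2*n)" and v: "v \<in> carrier_vec (2*n)"
  and h: "i_sigma_mat n X *\<^sub>v v = \<mu> \<cdot>\<^sub>v v" and l: "l < 2*n"
  shows "(cmat X *\<^sub>v v) $ l = \<mu> * (Kmat n *\<^sub>v v) $ l"
proof -
  define y where "y = cmat X *\<^sub>v v"
  have yc: "y \<in> carrier_vec (2*n)" unfolding y_def by (rule mult_mat_vec_carrier[OF cmat_carrier[OF X] v])
  have Sy: "cmat (sympl n) *\<^sub>v y = (- \<i> * \<mu>) \<cdot>\<^sub>v v"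
  proof (rule eq_vecI)
    fix k assume "k < dim_vec ((- \<i> * \<mu>) \<cdot>\<^sub>v v)"
    then have k: "k < 2*n" using v by simp
    have "\<i> * (cmat (sympl n) *\<^sub>v y) $ k = \<mu> * v $ k"
      using isig_vec[OF X v k] arg_cong[OF h, of "\<lambda>w. w $ k"] k v unfolding y_def by simp
    then have "(cmat (sympl n) *\<^sub>v y) $ k = - \<i> * (\<mu> * v $ k)"
      by (metis (no_types, lifting) complex_i_not_zero i_squared minus_mult_minus mult.assoc mult_1 mult_minus1)
    then show "(cmat (sympl n) *\<^sub>v y) $ k = ((- \<i> * \<mu>) \<cdot>\<^sub>v v) $ k" using k v by simp
  qed (use v in simp)
  have "y $ l = - (cmat (sympl n) *\<^sub>v (cmat (sympl n) *\<^sub>v y)) $ l" using SS_vec[OF yc l] by simp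
  also have "cmat (sympl n) *\<^sub>v (cmat (sympl n) *\<^sub>v y) = (- \<i> * \<mu>) \<cdot>\<^sub>v (cmat (sympl n) *\<^sub>v v)"
    unfolding Sy by (rule mult_mat_vec[OF cmat_carrier[OF sympl_carrier] v])
  finally show ?thesis unfolding y_def using K_vec[OF v l] l by simp
qed

lemma mtrace_mult: assumes "A \<in> carrier_mat m m" "B \<in> carrier_mat m m"
  shows "mtrace (A * B) = (\<Sum>i<m. \<Sum>k<m. A $$ (i,k) * B $$ (k,i))"
proof -
  have "dim_row (A * B) = m" using assms by simp
  then show ?thesis unfolding mtrace_def
  proof (intro sum.cong refl)
    fix i assume "i \<in> {..<m}"
    then show "(A * B) $$ (i, i) = (\<Sum>k<m. A $$ (i, k) * B $$ (k, i))" by (intro mm_index[OF assms]) auto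
  qed simp
qed

lemma mtrace_comm: assumes "A \<in> carrier_mat m m" "B \<in> carrier_mat m m"
  shows "mtrace (A * B) = mtrace (B * A)"
  unfolding mtrace_mult[OF assms] mtrace_mult[OF assms(2,1)]
  by (subst sum.swap) (simp add: mult.commute)

lemma mtrace_smult: assumes "A \<in> carrier_mat m m" "B \<in> carrier_mat m m"
  shows "mtrace ((c \<cdot>\<^sub>m A) * B) = c * mtrace (A * B)"
proof -
  have "c \<cdot>\<^sub>m A \<in> carrier_mat m m" using assms by simp
  from mtrace_mult[OF this assms(2)] mtrace_mult[OF assms] show ?thesis
    using assms by (simp add: sum_distrib_left mult.assoc)
qed

lemma cmat_smult: "cmat (c \<cdot>\<^sub>m Y) = complex_of_real c \<cdot>\<^sub>m cmat Y"
  by (rule eq_matI) (auto simp: cmat_def)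

lemma pt_smult: assumes Y: "Y \<in> carrier_mat (2*(NA+NB)) (2*(NA+NB))"
  shows "partial_transpose NA NB (c \<cdot>\<^sub>m Y) = c \<cdot>\<^sub>m partial_transpose NA NB Y"
proof -
  have Y': "c \<cdot>\<^sub>m Y \<in> carrier_mat (2*(NA+NB)) (2*(NA+NB))" using Y by simp
  have c1: "partial_transpose NA NB (c \<cdot>\<^sub>m Y) \<in> carrier_mat (2*(NA+NB)) (2*(NA+NB))" using Y' by (rule pt_carrier2)
  have c2: "partial_transpose NA NB Y \<in> carrier_mat (2*(NA+NB)) (2*(NA+NB))" using Y by (rule pt_carrier2)
  show ?thesis
  proof (rule eq_matI)
    fix i j assume "i < dim_row (c \<cdot>\<^sub>m partial_transpose NA NB Y)" "j < dim_col (c \<cdot>\<^sub>m partial_transpose NA NB Y)"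
    then have ij: "i < 2*(NA+NB)" "j < 2*(NA+NB)" using c2 by auto
    show "partial_transpose NA NB (c \<cdot>\<^sub>m Y) $$ (i, j) = (c \<cdot>\<^sub>m partial_transpose NA NB Y) $$ (i, j)"
      using ptg_index[OF Y' ij] ptg_index[OF Y ij] ij c2 Y by simp
  qed (use c1 c2 in auto)
qed

lemma real_sym_smult: assumes "real_sym m Y" shows "real_sym m (c \<cdot>\<^sub>m Y)"
proof -
  have c: "Y \<in> carrier_mat m m" and t: "transpose_mat Y = Y" using assms real_sym_def by auto
  have "transpose_mat (c \<cdot>\<^sub>m Y) = c \<cdot>\<^sub>m transpose_mat Y" by (rule eq_matI) auto
  then show ?thesis using c t unfolding real_sym_def by simp
qed

lemma real_psd_smult: assumes "real_psd m Y" "0 \<le> c" shows "real_psd m (c \<cdot>\<^sub>m Y)"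
  unfolding real_psd_def
proof (intro conjI ballI)
  have c: "Y \<in> carrier_mat m m" using assms real_psd_def by auto
  then show "c \<cdot>\<^sub>m Y \<in> carrier_mat m m" by simp
  fix v :: "real vec" assume v: "v \<in> carrier_vec m"
  have "(c \<cdot>\<^sub>m Y) *\<^sub>v v = c \<cdot>\<^sub>v (Y *\<^sub>v v)"
    by (rule eq_vecI) (use c v smult_mv_index[OF c v] in auto)
  moreover have "0 \<le> v \<bullet> (Y *\<^sub>v v)" using assms v real_psd_def by auto
  ultimately show "0 \<le> v \<bullet> (c \<cdot>\<^sub>m Y *\<^sub>v v)" using assms(2) v c by simp
qed

context
  fixes NA NB :: nat and g :: "real mat"
  assumes cm: "g \<in> cov_mats (NA+NB)"
begin

abbreviation "AA \<equiv> i_sigma_mat (NA+NB) (partial_transpose NA NB g)"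
abbreviation "EE \<equiv> symp_eigs (NA+NB) (partial_transpose NA NB g)"

lemma A_carrier: "AA \<in> carrier_mat (2*(NA+NB)) (2*(NA+NB))" by (rule isig_carrier[OF X_carrier[OF cm]])

lemma cp_nz: "char_poly AA \<noteq> 0"
proof
  assume "char_poly AA = 0"
  then show False using degree_monic_char_poly[OF A_carrier] by simp
qed

lemma E_root: "r \<in> EE \<Longrightarrow> poly (char_poly AA) (complex_of_real r) = 0"
  unfolding symp_eigs_def using eigenvalue_root_char_poly[OF A_carrier] by auto

lemma E_finite: "finite EE"
proof -
  have "EE \<subseteq> Re ` {x. poly (char_poly AA) x = 0}"
  proof
    fix r assume r: "r \<in> EE"
    show "r \<in> Re ` {x. poly (char_poly AA) x = 0}"
      using E_root[OF r] by (intro image_eqI[of _ _ "complex_of_real r"]) auto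
  qed
  then show ?thesis by (rule finite_surj[OF poly_roots_finite[OF cp_nz]])
qed

lemma E_mult: "r \<in> EE \<Longrightarrow> 1 \<le> symp_mult (NA+NB) (partial_transpose NA NB g) r"
proof -
  assume r: "r \<in> EE"
  have "order (complex_of_real r) (char_poly AA) \<noteq> 0" using E_root[OF r] cp_nz order_root by blast
  then show ?thesis unfolding symp_mult_def by simp
qed

lemma E_pos: "r \<in> EE \<Longrightarrow> 0 < r" unfolding symp_eigs_def by auto

definition LL where "LL = (\<Sum>r\<in>EE. real (symp_mult (NA+NB) (partial_transpose NA NB g) r) * min (ln r) 0)"

lemma log_neg_LL: "log_neg NA NB g = - LL" unfolding log_neg_def LL_def ..

lemma LL_nonpos: "LL \<le> 0"
  unfolding LL_def by (intro sum_nonpos) (simp add: mult_nonneg_nonpos)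

lemma LL_le: assumes t: "t \<in> EE" shows "exp LL \<le> t"
proof (cases "t < 1")
  case False
  have "exp LL \<le> 1" using LL_nonpos by simp
  then show ?thesis using False by linarith
next
  case True
  let ?f = "\<lambda>r. real (symp_mult (NA+NB) (partial_transpose NA NB g) r) * min (ln r) 0"
  have "LL = ?f t + (\<Sum>r\<in>EE - {t}. ?f r)" unfolding LL_def using E_finite t by (simp add: sum.remove)
  also have "(\<Sum>r\<in>EE - {t}. ?f r) \<le> 0" by (intro sum_nonpos) (simp add: mult_nonneg_nonpos)
  also have "?f t = real (symp_mult (NA+NB) (partial_transpose NA NB g) t) * ln t"
    using True E_pos[OF t] by simp
  also have "\<dots> \<le> ln t"
  proof -
    have "ln t < 0" using True E_pos[OF t] by simp
    moreover have "1 \<le> real (symp_mult (NA+NB) (partial_transpose NA NB g) t)" using E_mult[OF t] by simp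
    ultimately have "real (symp_mult (NA+NB) (partial_transpose NA NB g) t) * ln t \<le> 1 * ln t"
      by (intro mult_right_mono_neg) auto
    then show ?thesis by simp
  qed
  finally have "LL \<le> ln t" by simp
  then have "exp LL \<le> exp (ln t)" by simp
  then show ?thesis using E_pos[OF t] by simp
qed

lemma NS: assumes t0: "0 \<le> t" and tl: "t < exp LL" and v: "v \<in> carrier_vec (2*(NA+NB))"
  and z: "(cmat (partial_transpose NA NB g) + complex_of_real t \<cdot>\<^sub>m Kmat (NA+NB)) *\<^sub>v v = 0\<^sub>v (2*(NA+NB))"
  shows "v = 0\<^sub>v (2*(NA+NB))"
proof (rule ccontr)
  assume nz: "v \<noteq> 0\<^sub>v (2*(NA+NB))"
  have cX: "cmat (partial_transpose NA NB g) \<in> carrier_mat (2*(NA+NB)) (2*(NA+NB))" using X_carrier[OF cm] by simp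
  have cK: "Kmat (NA+NB) \<in> carrier_mat (2*(NA+NB)) (2*(NA+NB))" by (rule K_carrier)
  have e: "(cmat (partial_transpose NA NB g) *\<^sub>v v) $ l = - complex_of_real t * (Kmat (NA+NB) *\<^sub>v v) $ l" if l: "l < (2*(NA+NB))" for l
  proof -
    have "((cmat (partial_transpose NA NB g) + complex_of_real t \<cdot>\<^sub>m Kmat (NA+NB)) *\<^sub>v v) $ l =
       (cmat (partial_transpose NA NB g) *\<^sub>v v) $ l + complex_of_real t * (Kmat (NA+NB) *\<^sub>v v) $ l"
      using add_mult_distrib_mat_vec[OF cX smult_carrier_mat[OF cK] v] smult_mv_index[OF cK v l] l cX v by simp
    then have "(cmat (partial_transpose NA NB g) *\<^sub>v v) $ l + complex_of_real t * (Kmat (NA+NB) *\<^sub>v v) $ l = 0"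
      using z l by simp
    then show ?thesis by (simp add: eq_neg_iff_add_eq_0)
  qed
  show False
  proof (cases "t = 0")
    case True
    have "qform (2*(NA+NB)) (cmat (partial_transpose NA NB g)) v v = 0"
      unfolding qform_alt[OF cX v] using e True by simp
    then show False using X_pd[OF cm v nz] by simp
  next
    case False
    define w where "w = map_vec cnj v"
    have w: "w \<in> carrier_vec (2*(NA+NB))" using v unfolding w_def by simp
    have wnz: "w \<noteq> 0\<^sub>v (2*(NA+NB))"
    proof
      assume "w = 0\<^sub>v (2*(NA+NB))"
      then have wz: "w $ i = 0" if "i < 2*(NA+NB)" for i using that by simp
      have "v = 0\<^sub>v (2*(NA+NB))"
      proof (rule eq_vecI)
        fix i assume "i < dim_vec (0\<^sub>v (2*(NA+NB)) :: complex vec)"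
        then have i: "i < 2*(NA+NB)" by simp
        then have "cnj (v $ i) = 0" using wz[OF i] v unfolding w_def by simp
        then show "v $ i = 0\<^sub>v (2*(NA+NB)) $ i" using i by simp
      qed (use v in simp)
      then show False using nz by simp
    qed
    have ew: "(cmat (partial_transpose NA NB g) *\<^sub>v w) $ l = complex_of_real t * (Kmat (NA+NB) *\<^sub>v w) $ l" if l: "l < (2*(NA+NB))" for l
      unfolding w_def cmat_mv_cnj[OF X_carrier[OF cm] v l] K_mv_cnj[OF v l] e[OF l] by simp
    have "AA *\<^sub>v w = complex_of_real t \<cdot>\<^sub>v w" by (rule EIG_bwd[OF X_carrier[OF cm] w ew])
    then have "eigenvalue AA (complex_of_real t)"
      unfolding eigenvalue_def eigenvector_def using w wnz A_carrier by auto
    then have "t \<in> EE" unfolding symp_eigs_def using t0 False by auto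
    then have "exp LL \<le> t" by (rule LL_le)
    with tl show False by simp
  qed
qed

lemma PPT_scaled: "cpx_psd (2*(NA+NB)) (cmat (partial_transpose NA NB g) + complex_of_real (exp LL) \<cdot>\<^sub>m Kmat (NA+NB))"
  by (rule HL[OF X_psd[OF cm] herm_K]) (use NS in auto)

end

lemma cov_psd: "g \<in> cov_mats n \<Longrightarrow> real_psd (2*n) g" unfolding cov_mats_def by blast

lemma part1_bound:
  fixes NA NB :: nat and g Z :: "real mat"
  assumes PPT: "\<forall>g' \<in> cov_mats (NA + NB).
      g' \<in> sep_cov_mats NA NB \<longleftrightarrow>
      cpx_psd (2*(NA+NB)) (plus_i_sigma (NA+NB) (partial_transpose NA NB g'))"
    and cm: "g \<in> cov_mats (NA + NB)"
    and Z: "Z \<in> witnesses NA NB"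
  shows "exp (LL NA NB g) \<le> mtrace (Z * g)"
proof -
  define p where "p = exp (LL NA NB g)"
  define c where "c = 1 / p"
  have p0: "0 < p" unfolding p_def by simp
  have p1: "p \<le> 1" unfolding p_def using LL_nonpos[OF cm] by simp
  have c1: "1 \<le> c" unfolding c_def using p0 p1 by simp
  have cp: "c * p = 1" unfolding c_def using p0 by simp
  let ?m = "2*(NA+NB)"
  have gc: "g \<in> carrier_mat ?m ?m" by (rule g_carrier[OF cm])
  have Gc: "cmat g \<in> carrier_mat ?m ?m" using gc by simp
  have Kc: "Kmat (NA+NB) \<in> carrier_mat ?m ?m" by (rule K_carrier)
  have Xc: "cmat (partial_transpose NA NB g) \<in> carrier_mat ?m ?m" using X_carrier[OF cm] by simp
  define g' where "g' = c \<cdot>\<^sub>m g"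
  have g'c: "g' \<in> carrier_mat ?m ?m" unfolding g'_def using gc by simp
  have cov': "g' \<in> cov_mats (NA+NB)"
    unfolding cov_mats_def mem_Collect_eq
  proof (intro conjI)
    show "real_sym ?m g'" unfolding g'_def by (rule real_sym_smult[OF g_sym[OF cm]])
    show "real_psd ?m g'" unfolding g'_def using c1 by (intro real_psd_smult[OF cov_psd[OF cm]]) simp
    have hG: "herm ?m (complex_of_real c \<cdot>\<^sub>m cmat g)" by (rule herm_smult[OF cov_herm[OF cm]])
    have Gs: "complex_of_real c \<cdot>\<^sub>m cmat g \<in> carrier_mat ?m ?m" using Gc by simp
    show "cpx_psd ?m (plus_i_sigma (NA+NB) g')"
      unfolding plus_K g'_def cmat_smult cpx_psd_iff
    proof (intro conjI ballI)
      show "herm ?m (complex_of_real c \<cdot>\<^sub>m cmat g + Kmat (NA+NB))" by (intro herm_add hG herm_K)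
      fix v :: "complex vec" assume v: "v \<in> carrier_vec ?m"
      have "Re (qform ?m (cmat g) v v) \<le> c * Re (qform ?m (cmat g) v v)"
        using c1 G_nonneg[OF cm v] by (metis mult_le_cancel_right1 not_le order_trans)
      then show "0 \<le> Re (qform ?m (complex_of_real c \<cdot>\<^sub>m cmat g + Kmat (NA+NB)) v v)"
        using cov_ineq[OF cm v] Gc Kc Gs by (simp add: qform_add qform_smult)
    qed
    show "cpx_psd ?m (minus_i_sigma (NA+NB) g')"
      unfolding minus_K g'_def cmat_smult cpx_psd_iff
    proof (intro conjI ballI)
      have "herm ?m (complex_of_real c \<cdot>\<^sub>m cmat g + complex_of_real (-1) \<cdot>\<^sub>m Kmat (NA+NB))"
        by (intro herm_add hG herm_smult herm_K)
      moreover have "complex_of_real c \<cdot>\<^sub>m cmat g + complex_of_real (-1) \<cdot>\<^sub>m Kmat (NA+NB) =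
          complex_of_real c \<cdot>\<^sub>m cmat g - Kmat (NA+NB)"
        by (rule eq_matI) (use Gc Kc in auto)
      ultimately show "herm ?m (complex_of_real c \<cdot>\<^sub>m cmat g - Kmat (NA+NB))" by simp
      fix v :: "complex vec" assume v: "v \<in> carrier_vec ?m"
      have "Re (qform ?m (cmat g) v v) \<le> c * Re (qform ?m (cmat g) v v)"
        using c1 G_nonneg[OF cm v] by (metis mult_le_cancel_right1 not_le order_trans)
      then show "0 \<le> Re (qform ?m (complex_of_real c \<cdot>\<^sub>m cmat g - Kmat (NA+NB)) v v)"
        using cov_ineq[OF cm v] Gc Kc Gs by (simp add: qform_minus qform_smult)
    qed
  qed
  have ppt': "cpx_psd ?m (plus_i_sigma (NA+NB) (partial_transpose NA NB g'))"
    unfolding plus_K g'_def pt_smult[OF gc] cmat_smult cpx_psd_iff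
  proof (intro conjI ballI)
    show "herm ?m (complex_of_real c \<cdot>\<^sub>m cmat (partial_transpose NA NB g) + Kmat (NA+NB))"
      by (intro herm_add herm_smult X_herm[OF cm] herm_K)
    fix v :: "complex vec" assume v: "v \<in> carrier_vec ?m"
    have "0 \<le> Re (qform ?m (cmat (partial_transpose NA NB g) + complex_of_real p \<cdot>\<^sub>m Kmat (NA+NB)) v v)"
      using PPT_scaled[OF cm] v unfolding cpx_psd_iff p_def by auto
    then have h: "0 \<le> Re (qform ?m (cmat (partial_transpose NA NB g)) v v) + p * Re (qform ?m (Kmat (NA+NB)) v v)"
      using Xc Kc by (simp add: qform_add qform_smult)
    have "0 \<le> c * (Re (qform ?m (cmat (partial_transpose NA NB g)) v v) + p * Re (qform ?m (Kmat (NA+NB)) v v))"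
      using h c1 by simp
    also have "\<dots> = c * Re (qform ?m (cmat (partial_transpose NA NB g)) v v) + Re (qform ?m (Kmat (NA+NB)) v v)"
      using cp by (simp add: algebra_simps)
    finally show "0 \<le> Re (qform ?m (complex_of_real c \<cdot>\<^sub>m cmat (partial_transpose NA NB g) + Kmat (NA+NB)) v v)"
      using Xc Kc by (simp add: qform_add qform_smult)
  qed
  have sep: "g' \<in> sep_cov_mats NA NB" using PPT cov' ppt' by blast
  have Zc: "Z \<in> carrier_mat ?m ?m" using Z unfolding witnesses_def real_sym_def by blast
  have "1 \<le> mtrace (g' * Z)" using Z sep unfolding witnesses_def by blast
  also have "mtrace (g' * Z) = c * mtrace (g * Z)" unfolding g'_def by (rule mtrace_smult[OF gc Zc])
  also have "mtrace (g * Z) = mtrace (Z * g)" by (rule mtrace_comm[OF gc Zc])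
  finally have "1 \<le> c * mtrace (Z * g)" .
  then have "p * 1 \<le> p * (c * mtrace (Z * g))" using p0 by simp
  moreover have "p * (c * mtrace (Z * g)) = (c * p) * mtrace (Z * g)" by (simp add: ac_simps)
  ultimately show ?thesis unfolding p_def[symmetric] using cp by simp
qed

lemma part1:
  fixes NA NB :: nat and g Z :: "real mat"
  assumes PPT: "\<forall>g' \<in> cov_mats (NA + NB).
      g' \<in> sep_cov_mats NA NB \<longleftrightarrow>
      cpx_psd (2*(NA+NB)) (plus_i_sigma (NA+NB) (partial_transpose NA NB g'))"
    and cm: "g \<in> cov_mats (NA + NB)"
    and Z: "Z \<in> witnesses NA NB" and m0: "0 < mtrace (Z * g)"
  shows "ln (1 / mtrace (Z * g)) \<le> log_neg NA NB g"
proof -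
  have b: "exp (LL NA NB g) \<le> mtrace (Z * g)" by (rule part1_bound[OF PPT cm Z])
  then have "LL NA NB g \<le> ln (mtrace (Z * g))" using m0 by (metis exp_le_cancel_iff exp_ln)
  then show ?thesis using m0 log_neg_LL[OF cm] by (simp add: ln_div)
qed

lemma qform_real_Re: assumes "Y \<in> carrier_mat m m"
  shows "Re (qform m (cmat Y) w w) = (\<Sum>i<m. \<Sum>j<m. Y $$ (i,j) * (Re (w$i) * Re (w$j) + Im (w$i) * Im (w$j)))"
  unfolding qform_def Re_sum using assms by (intro sum.cong refl) (auto simp: algebra_simps)

context
  fixes NA NB :: nat and g :: "real mat"
  assumes PPT: "\<forall>g' \<in> cov_mats (NA + NB).
      g' \<in> sep_cov_mats NA NB \<longleftrightarrow>
      cpx_psd (2*(NA+NB)) (plus_i_sigma (NA+NB) (partial_transpose NA NB g'))"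
    and cm: "g \<in> cov_mats (NA + NB)"
begin

lemma witness_exists: assumes r: "r \<in> EE NA NB g"
  shows "\<exists>Z \<in> witnesses NA NB. mtrace (Z * g) = r"
proof -
  let ?m = "2*(NA+NB)"
  let ?X = "partial_transpose NA NB g"
  have r0: "0 < r" using r unfolding symp_eigs_def by auto
  from r obtain v where ev: "eigenvector (AA NA NB g) v (complex_of_real r)"
    unfolding symp_eigs_def eigenvalue_def by auto
  have dA: "dim_row (AA NA NB g) = ?m" using A_carrier[OF cm] by simp
  have v: "v \<in> carrier_vec ?m" and vnz: "v \<noteq> 0\<^sub>v ?m" and Av: "AA NA NB g *\<^sub>v v = complex_of_real r \<cdot>\<^sub>v v"
    using ev unfolding eigenvector_def dA by auto
  have Xc: "?X \<in> carrier_mat ?m ?m" by (rule X_carrier[OF cm])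
  have cXc: "cmat ?X \<in> carrier_mat ?m ?m" using Xc by simp
  have ef: "(cmat ?X *\<^sub>v v) $ l = complex_of_real r * (Kmat (NA+NB) *\<^sub>v v) $ l" if l: "l < ?m" for l
    by (rule EIG_fwd[OF Xc v Av l])
  define w where "w = map_vec cnj v"
  have w: "w \<in> carrier_vec ?m" using v unfolding w_def by simp
  have wnz: "w \<noteq> 0\<^sub>v ?m"
  proof
    assume "w = 0\<^sub>v ?m"
    then have wz: "w $ i = 0" if "i < ?m" for i using that by simp
    have "v = 0\<^sub>v ?m"
    proof (rule eq_vecI)
      fix i assume "i < dim_vec (0\<^sub>v ?m :: complex vec)"
      then have i: "i < ?m" by simp
      then have "cnj (v $ i) = 0" using wz[OF i] v unfolding w_def by simp
      then show "v $ i = 0\<^sub>v ?m $ i" using i by simp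
    qed (use v in simp)
    then show False using vnz by simp
  qed
  have ew: "(cmat ?X *\<^sub>v w) $ l = - complex_of_real r * (Kmat (NA+NB) *\<^sub>v w) $ l" if l: "l < ?m" for l
    unfolding w_def cmat_mv_cnj[OF Xc v l] K_mv_cnj[OF v l] ef[OF l] by simp
  have qXK: "qform ?m (cmat ?X) w w = - complex_of_real r * qform ?m (Kmat (NA+NB)) w w"
    unfolding qform_alt[OF cXc w] qform_alt[OF K_carrier w] sum_distrib_left
    by (intro sum.cong refl) (simp add: ew)
  define \<kappa> where "\<kappa> = - Re (qform ?m (Kmat (NA+NB)) w w)"
  have qX: "Re (qform ?m (cmat ?X) w w) = r * \<kappa>" unfolding \<kappa>_def qXK by simp
  have k0: "0 < \<kappa>" using X_pd[OF cm w wnz] r0 qX by (simp add: zero_less_mult_iff)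
  define a where "a i = Re (w $ i)" for i
  define b where "b i = Im (w $ i)" for i
  define Z where "Z = mat ?m ?m (\<lambda>(i,j). dd NA i * dd NA j * (a i * a j + b i * b j) / \<kappa>)"
  have Zc: "Z \<in> carrier_mat ?m ?m" unfolding Z_def by simp
  have tr: "mtrace (Y * Z) = Re (qform ?m (cmat (partial_transpose NA NB Y)) w w) / \<kappa>"
    if Y: "Y \<in> carrier_mat ?m ?m" for Y
  proof -
    have PY: "partial_transpose NA NB Y \<in> carrier_mat ?m ?m" using Y by (rule pt_carrier2)
    have "mtrace (Y * Z) = (\<Sum>i<?m. \<Sum>k<?m. Y $$ (i,k) * Z $$ (k,i))" by (rule mtrace_mult[OF Y Zc])
    also have "\<dots> = (\<Sum>i<?m. \<Sum>k<?m. partial_transpose NA NB Y $$ (i,k) * (a i * a k + b i * b k) / \<kappa>)"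
      by (intro sum.cong refl) (simp add: Z_def ptg_index[OF Y] algebra_simps)
    also have "\<dots> = Re (qform ?m (cmat (partial_transpose NA NB Y)) w w) / \<kappa>"
      unfolding qform_real_Re[OF PY] a_def b_def by (simp add: sum_divide_distrib)
    finally show ?thesis .
  qed
  have Zsym: "real_sym ?m Z"
    unfolding real_sym_def
  proof
    show "Z \<in> carrier_mat ?m ?m" by (rule Zc)
    show "transpose_mat Z = Z"
      by (rule eq_matI) (auto simp: Z_def algebra_simps)
  qed
  have Zw: "Z \<in> witnesses NA NB"
    unfolding witnesses_def mem_Collect_eq
  proof (intro conjI ballI)
    show "real_sym ?m Z" by (rule Zsym)
    fix g' assume g': "g' \<in> sep_cov_mats NA NB"
    then have cg': "g' \<in> cov_mats (NA+NB)" unfolding sep_cov_mats_def by blast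
    then have ppt: "cpx_psd ?m (plus_i_sigma (NA+NB) (partial_transpose NA NB g'))" using PPT g' by blast
    have g'c: "g' \<in> carrier_mat ?m ?m" by (rule g_carrier[OF cg'])
    have Pc: "cmat (partial_transpose NA NB g') \<in> carrier_mat ?m ?m" using pt_carrier2[OF g'c] by simp
    have "0 \<le> Re (qform ?m (cmat (partial_transpose NA NB g') + Kmat (NA+NB)) w w)"
      using ppt w unfolding plus_K cpx_psd_iff by auto
    then have "0 \<le> Re (qform ?m (cmat (partial_transpose NA NB g')) w w + qform ?m (Kmat (NA+NB)) w w)"
      unfolding qform_add[OF Pc K_carrier] .
    then have "\<kappa> \<le> Re (qform ?m (cmat (partial_transpose NA NB g')) w w)"
      unfolding \<kappa>_def qform_add[OF Pc K_carrier] by simp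
    then show "1 \<le> mtrace (g' * Z)" unfolding tr[OF g'c] using k0 by simp
  qed
  have "mtrace (Z * g) = mtrace (g * Z)" by (rule mtrace_comm[OF Zc g_carrier[OF cm]])
  also have "\<dots> = r" unfolding tr[OF g_carrier[OF cm]] qX using k0 by simp
  finally show ?thesis using Zw by blast
qed

end

lemma poly_lin_prod: "poly (\<Prod>a\<leftarrow>as. [:- a, 1:]) (x :: 'a :: comm_ring_1) = (\<Prod>a\<leftarrow>as. x - a)"
proof (induct as)
  case Nil
  then show ?case by simp
next
  case (Cons a as)
  have "poly (\<Prod>y\<leftarrow>a#as. [:- y, 1:]) x = poly [:- a, 1:] x * poly (\<Prod>y\<leftarrow>as. [:- y, 1:]) x"
    by (simp only: list.map prod_list.Cons poly_mult)
  also have "poly [:- a, 1:] x = x - a" by (simp add: algebra_simps)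
  finally show ?case using Cons by simp
qed

lemma lin_prod_nz: "(\<Prod>a\<leftarrow>as. [:- a, 1:]) \<noteq> (0 :: 'a :: idom poly)"
proof (induct as)
  case Nil
  then show ?case by simp
next
  case (Cons a as)
  have e: "(\<Prod>x\<leftarrow>a#as. [:- x, 1:]) = [:- a, 1:] * (\<Prod>x\<leftarrow>as. [:- x, 1:])" by simp
  have "[:- a, 1:] \<noteq> (0 :: 'a poly)" by simp
  then show ?case unfolding e using Cons by (simp only: mult_eq_0_iff) simp
qed

lemma order_lin_prod: "order (x :: 'a :: idom) (\<Prod>a\<leftarrow>as. [:- a, 1:]) = count (mset as) x"
proof (induct as)
  case Nil
  then show ?case by (simp add: order_0I)
next
  case (Cons a as)
  have e: "(\<Prod>x\<leftarrow>a#as. [:- x, 1:]) = [:- a, 1:] * (\<Prod>x\<leftarrow>as. [:- x, 1:])" by simp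
  have nz: "[:- a, 1:] * (\<Prod>a\<leftarrow>as. [:- a, 1:]) \<noteq> 0" using lin_prod_nz[of "a # as"] unfolding e .
  have o1: "order x [:- a, 1:] = (if x = a then 1 else 0)"
  proof (cases "x = a")
    case True
    then show ?thesis using order_power_n_n[of a 1] by simp
  next
    case False
    then have "poly [:- a, 1:] x \<noteq> 0" by simp
    then have "order x [:- a, 1:] = 0" by (rule order_0I)
    then show ?thesis using False by simp
  qed
  show ?case unfolding e order_mult[OF nz] o1 Cons by simp
qed

lemma root_lin_prod: "poly (\<Prod>a\<leftarrow>as. [:- a, 1:]) (x :: 'a :: idom) = 0 \<longleftrightarrow> x \<in> set as"
  unfolding poly_lin_prod by (induct as) auto

lemma uminus_mat_smult: "- (M :: 'a :: comm_ring_1 mat) = (-1) \<cdot>\<^sub>m M"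
  by (rule eq_matI) auto

lemma det_roots: fixes B :: "complex mat"
  assumes B: "B \<in> carrier_mat k k" and cp: "char_poly B = (\<Prod>a\<leftarrow>as. [:- a, 1:])"
  shows "cmod (det B) = (\<Prod>a\<leftarrow>as. cmod a)"
proof -
  have "poly (char_poly B) 0 = det (- (char_matrix B 0))" by (rule char_poly_matrix[OF B])
  also have "- (char_matrix B 0) = (-1) \<cdot>\<^sub>m B"
    unfolding char_matrix_def by (rule eq_matI) (use B in auto)
  also have "det ((-1) \<cdot>\<^sub>m B) = (-1) ^ k * det B" using B by simp
  finally have "cmod (det B) = cmod (poly (char_poly B) 0)" by (simp add: norm_mult norm_power)
  also have "\<dots> = cmod (\<Prod>a\<leftarrow>as. 0 - a)" unfolding cp poly_lin_prod ..
  also have "\<dots> = (\<Prod>a\<leftarrow>as. cmod a)" by (induct as) (auto simp: norm_mult)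
  finally show ?thesis .
qed

lemma qform_eig: assumes X: "X \<in> carrier_mat (2*n) (2*n)" and v: "v \<in> carrier_vec (2*n)"
  and Av: "i_sigma_mat n X *\<^sub>v v = \<mu> \<cdot>\<^sub>v v"
  shows "qform (2*n) (cmat X) v v = \<mu> * qform (2*n) (Kmat n) v v"
proof -
  have cX: "cmat X \<in> carrier_mat (2*n) (2*n)" using X by simp
  show ?thesis unfolding qform_alt[OF cX v] qform_alt[OF K_carrier v] sum_distrib_left
    by (intro sum.cong refl) (simp add: EIG_fwd[OF X v Av])
qed

lemma eig_ratio: assumes e: "x = \<mu> * k" and xr: "Im x = 0" and kr: "Im k = 0" and xp: "0 < Re x"
  shows "Im \<mu> = 0" "\<mu> \<noteq> 0" "\<mu> = complex_of_real (Re x / Re k)" "Re k \<noteq> 0"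
proof -
  have k0: "k \<noteq> 0" using e xp by auto
  then have rk: "Re k \<noteq> 0" using kr complex_eq_iff by auto
  have "\<mu> = x / k" using e k0 by simp
  also have "x = complex_of_real (Re x)" using xr complex_eq_iff by auto
  also have "k = complex_of_real (Re k)" using kr complex_eq_iff by auto
  finally have m: "\<mu> = complex_of_real (Re x / Re k)" by simp
  then show "Im \<mu> = 0" by simp
  show "\<mu> \<noteq> 0" using e xp by auto
  show "\<mu> = complex_of_real (Re x / Re k)" by (rule m)
  show "Re k \<noteq> 0" by (rule rk)
qed

context
  fixes NA NB :: nat and g :: "real mat"
  assumes cm: "g \<in> cov_mats (NA + NB)"
begin

lemma AA_eig_real: assumes "eigenvalue (AA NA NB g) \<mu>"
  shows "Im \<mu> = 0" "\<mu> \<noteq> 0"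
proof -
  let ?m = "2*(NA+NB)"
  have dA: "dim_row (AA NA NB g) = ?m" using A_carrier[OF cm] by simp
  from assms obtain v where v: "v \<in> carrier_vec ?m" and vnz: "v \<noteq> 0\<^sub>v ?m"
    and Av: "AA NA NB g *\<^sub>v v = \<mu> \<cdot>\<^sub>v v"
    unfolding eigenvalue_def eigenvector_def dA by auto
  have e: "qform ?m (cmat (partial_transpose NA NB g)) v v = \<mu> * qform ?m (Kmat (NA+NB)) v v"
    by (rule qform_eig[OF X_carrier[OF cm] v Av])
  note r = eig_ratio[OF e herm_real[OF X_herm[OF cm]] herm_real[OF herm_K] X_pd[OF cm v vnz]]
  show "Im \<mu> = 0" "\<mu> \<noteq> 0" using r by auto
qed

lemma G_eig_ge1: assumes "eigenvalue (i_sigma_mat (NA+NB) g) \<mu>"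
  shows "1 \<le> cmod \<mu>"
proof -
  let ?m = "2*(NA+NB)"
  have gc: "g \<in> carrier_mat ?m ?m" by (rule g_carrier[OF cm])
  have dA: "dim_row (i_sigma_mat (NA+NB) g) = ?m" using isig_carrier[OF gc] by simp
  from assms obtain v where v: "v \<in> carrier_vec ?m" and vnz: "v \<noteq> 0\<^sub>v ?m"
    and Av: "i_sigma_mat (NA+NB) g *\<^sub>v v = \<mu> \<cdot>\<^sub>v v"
    unfolding eigenvalue_def eigenvector_def dA by auto
  have e: "qform ?m (cmat g) v v = \<mu> * qform ?m (Kmat (NA+NB)) v v"
    by (rule qform_eig[OF gc v Av])
  have pd: "0 < Re (qform ?m (cmat g) v v)" by (rule cov_pd[OF cm v vnz])
  note r = eig_ratio[OF e herm_real[OF cov_herm[OF cm]] herm_real[OF herm_K] pd]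
  have "\<bar>Re (qform ?m (Kmat (NA+NB)) v v)\<bar> \<le> Re (qform ?m (cmat g) v v)"
    using cov_ineq[OF cm v] by linarith
  then have "1 \<le> \<bar>Re (qform ?m (cmat g) v v) / Re (qform ?m (Kmat (NA+NB)) v v)\<bar>"
    using r(4) pd by (simp add: abs_div le_divide_eq)
  then show ?thesis using r(3) by (simp add: norm_divide)
qed

end

lemma cmat_mult: assumes "A \<in> carrier_mat a b" "B \<in> carrier_mat b c"
  shows "cmat (A * B) = cmat A * cmat B"
  unfolding cmat_def using of_real_hom.mat_hom_mult[OF assms] by simp

lemma pt_dims[simp]: "dim_row (pt_mat NA NB) = 2*(NA+NB)" "dim_col (pt_mat NA NB) = 2*(NA+NB)"
  unfolding pt_mat_def by auto

lemma pt_sq: "pt_mat NA NB * pt_mat NA NB = 1\<^sub>m (2*(NA+NB))"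
proof (rule eq_matI)
  let ?m = "2*(NA+NB)"
  fix i j assume "i < dim_row (1\<^sub>m ?m :: real mat)" "j < dim_col (1\<^sub>m ?m :: real mat)"
  then have ij: "i < ?m" "j < ?m" by auto
  have "(pt_mat NA NB * pt_mat NA NB) $$ (i,j) = (\<Sum>k<?m. pt_mat NA NB $$ (i,k) * pt_mat NA NB $$ (k,j))"
    by (rule mm_index[OF pt_carrier pt_carrier ij])
  also have "\<dots> = (\<Sum>k<?m. if k = i then (if i = j then dd NA i * dd NA i else 0) else 0)"
    using ij by (intro sum.cong refl) (auto simp: pt_index)
  also have "\<dots> = (if i = j then 1 else 0)" using ij by (simp add: sum_single)
  finally show "(pt_mat NA NB * pt_mat NA NB) $$ (i,j) = 1\<^sub>m ?m $$ (i,j)" using ij by simp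
qed auto

lemma det_cmat_pt: assumes g: "g \<in> carrier_mat (2*(NA+NB)) (2*(NA+NB))"
  shows "det (cmat (partial_transpose NA NB g)) = det (cmat g)"
proof -
  let ?m = "2*(NA+NB)" and ?P = "cmat (pt_mat NA NB)"
  have Pc: "?P \<in> carrier_mat ?m ?m" by (rule cmat_carrier[OF pt_carrier])
  have Gc: "cmat g \<in> carrier_mat ?m ?m" using g by simp
  have e: "cmat (partial_transpose NA NB g) = ?P * cmat g * ?P"
    unfolding partial_transpose_def
    by (subst cmat_mult[OF mult_carrier_mat[OF pt_carrier g] pt_carrier], subst cmat_mult[OF pt_carrier g]) simp
  have "?P * ?P = cmat (pt_mat NA NB * pt_mat NA NB)" by (rule cmat_mult[OF pt_carrier pt_carrier, symmetric])
  also have "\<dots> = cmat (1\<^sub>m ?m)" unfolding pt_sq ..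
  also have "cmat (1\<^sub>m ?m) = 1\<^sub>m ?m" by (rule eq_matI) (auto simp: cmat_def)
  finally have PP: "?P * ?P = 1\<^sub>m ?m" .
  have dP: "det ?P * det ?P = 1" using det_mult[OF Pc Pc] PP by simp
  have "det (?P * cmat g * ?P) = det ?P * det (cmat g) * det ?P"
    using det_mult[OF mult_carrier_mat[OF Pc Gc] Pc] det_mult[OF Pc Gc] by simp
  also have "\<dots> = (det ?P * det ?P) * det (cmat g)" by (simp add: ac_simps)
  finally show ?thesis unfolding e dP by simp
qed

lemma det_isig: assumes Y: "Y \<in> carrier_mat (2*n) (2*n)"
  shows "det (i_sigma_mat n Y) = \<i> ^ (2*n) * (det (cmat (sympl n)) * det (cmat Y))"
proof -
  have Sc: "cmat (sympl n) \<in> carrier_mat (2*n) (2*n)" by simp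
  have Yc: "cmat Y \<in> carrier_mat (2*n) (2*n)" using Y by simp
  have "det (i_sigma_mat n Y) = \<i> ^ dim_col (cmat (sympl n) * cmat Y) * det (cmat (sympl n) * cmat Y)"
    unfolding i_sigma_mat_def by (rule det_smult)
  also have "dim_col (cmat (sympl n) * cmat Y) = 2*n" using Y by (simp add: carrier_matD)
  also have "det (cmat (sympl n) * cmat Y) = det (cmat (sympl n)) * det (cmat Y)" by (rule det_mult[OF Sc Yc])
  finally show ?thesis .
qed

lemma det_AA: assumes cm: "g \<in> cov_mats (NA+NB)"
  shows "det (AA NA NB g) = det (i_sigma_mat (NA+NB) g)"
  unfolding det_isig[OF X_carrier[OF cm]] det_isig[OF g_carrier[OF cm]] det_cmat_pt[OF g_carrier[OF cm]] ..

definition fp :: "nat \<Rightarrow> nat" where "fp i = (if even i then i + 1 else i - 1)"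
definition sg :: "nat \<Rightarrow> real" where "sg i = (if even i then 1 else -1)"

lemma fp_lt: "i < 2*n \<Longrightarrow> fp i < 2*n" unfolding fp_def by presburger
lemma fp_fp: "fp (fp i) = i" unfolding fp_def by presburger
lemma sg_fp: "sg (fp i) = - sg i"
proof (cases "even i")
  case True then show ?thesis by (simp add: fp_def sg_def)
next
  case False
  then obtain k where "i = 2*k+1" by (rule oddE)
  then show ?thesis by (simp add: fp_def sg_def)
qed
lemma sg_sq: "sg i * sg i = 1" unfolding sg_def by simp

lemma sgc: "complex_of_real (sg i) * complex_of_real (sg i) = 1"
  by (metis of_real_1 of_real_mult sg_sq)

lemma iisq: "\<i> * a * (\<i> * b) = - (a * b)"
proof -
  have "\<i> * a * (\<i> * b) = (\<i> * \<i>) * (a * b)" by (simp add: ac_simps)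
  then show ?thesis by simp
qed

lemma fp_eq: "(k = fp i) = (i = fp k)" using fp_fp by metis

lemma sympl_fp: assumes "i < 2*n" "k < 2*n"
  shows "sympl n $$ (i,k) = (if k = fp i then sg i else 0)"
proof (cases "even i")
  case True then show ?thesis unfolding sympl_entry[OF assms] fp_def sg_def by auto
next
  case False
  then obtain k where "i = 2*k+1" by (rule oddE)
  then show ?thesis unfolding sympl_entry[OF assms] fp_def sg_def by auto
qed

lemma K_index: assumes "i < 2*n" "k < 2*n"
  shows "Kmat n $$ (i,k) = (if k = fp i then \<i> * complex_of_real (sg i) else 0)"
  using assms unfolding Kmat_def by (simp add: sympl_fp)

lemma KN_index: assumes N: "N \<in> carrier_mat (2*n) (2*n)" and i: "i < 2*n" and j: "j < 2*n"
  shows "(Kmat n * N) $$ (i,j) = \<i> * complex_of_real (sg i) * N $$ (fp i, j)"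
proof -
  have "(Kmat n * N) $$ (i,j) = (\<Sum>k<2*n. Kmat n $$ (i,k) * N $$ (k,j))"
    by (rule mm_index[OF K_carrier N i j])
  also have "\<dots> = (\<Sum>k<2*n. if k = fp i then \<i> * complex_of_real (sg i) * N $$ (k,j) else 0)"
    using i by (intro sum.cong refl) (auto simp: K_index)
  also have "\<dots> = \<i> * complex_of_real (sg i) * N $$ (fp i, j)"
    by (rule sum_single[OF fp_lt[OF i]])
  finally show ?thesis .
qed

lemma NK_index: assumes N: "N \<in> carrier_mat (2*n) (2*n)" and i: "i < 2*n" and j: "j < 2*n"
  shows "(N * Kmat n) $$ (i,j) = N $$ (i, fp j) * (\<i> * complex_of_real (sg (fp j)))"
proof -
  have "(N * Kmat n) $$ (i,j) = (\<Sum>k<2*n. N $$ (i,k) * Kmat n $$ (k,j))"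
    by (rule mm_index[OF N K_carrier i j])
  also have "\<dots> = (\<Sum>k<2*n. if k = fp j then N $$ (i,k) * (\<i> * complex_of_real (sg k)) else 0)"
    using j by (intro sum.cong refl) (auto simp: K_index fp_eq)
  also have "\<dots> = N $$ (i, fp j) * (\<i> * complex_of_real (sg (fp j)))"
    by (rule sum_single[OF fp_lt[OF j]])
  finally show ?thesis .
qed

lemma KK_one: "Kmat n * Kmat n = 1\<^sub>m (2*n)"
proof (rule eq_matI)
  fix i j assume "i < dim_row (1\<^sub>m (2*n) :: complex mat)" "j < dim_col (1\<^sub>m (2*n) :: complex mat)"
  then have ij: "i < 2*n" "j < 2*n" by auto
  have "(Kmat n * Kmat n) $$ (i,j) = \<i> * complex_of_real (sg i) * Kmat n $$ (fp i, j)"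
    by (rule KN_index[OF K_carrier ij])
  also have "\<dots> = (if i = j then 1 else 0)"
    using ij fp_lt[OF ij(1)] by (auto simp: K_index fp_fp sg_fp fp_eq iisq sgc)
  finally show "(Kmat n * Kmat n) $$ (i,j) = 1\<^sub>m (2*n) $$ (i,j)" using ij by simp
qed auto

lemma det_K_sq: "det (Kmat n) * det (Kmat n) = 1"
  using det_mult[OF K_carrier K_carrier, of n] KK_one[of n] by simp

lemma det_neg_even: assumes C: "C \<in> carrier_mat (2*n) (2*n)"
  shows "det (- C) = det (C :: complex mat)"
proof -
  have "det (- C) = det ((-1) \<cdot>\<^sub>m C)" by (simp add: uminus_mat_smult)
  also have "\<dots> = (-1) ^ (2*n) * det C" using C by simp
  finally show ?thesis by simp
qed

context
  fixes NA NB :: nat and g :: "real mat"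
  assumes cm: "g \<in> cov_mats (NA + NB)"
begin

lemma XC_sym: assumes i: "i < 2*(NA+NB)" and j: "j < 2*(NA+NB)"
  shows "cmat (partial_transpose NA NB g) $$ (j,i) = cmat (partial_transpose NA NB g) $$ (i,j)"
proof -
  have c: "partial_transpose NA NB g \<in> carrier_mat (2*(NA+NB)) (2*(NA+NB))" by (rule X_carrier[OF cm])
  have "cmat (partial_transpose NA NB g) $$ (j,i) = cnj (cmat (partial_transpose NA NB g) $$ (i,j))"
    by (rule hermD[OF X_herm[OF cm] i j])
  also have "\<dots> = cmat (partial_transpose NA NB g) $$ (i,j)" using c i j by simp
  finally show ?thesis .
qed

lemma A_index: assumes i: "i < 2*(NA+NB)" and j: "j < 2*(NA+NB)"
  shows "AA NA NB g $$ (i,j) = \<i> * complex_of_real (sg i) * cmat (partial_transpose NA NB g) $$ (fp i, j)"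
proof -
  let ?m = "2*(NA+NB)" and ?XC = "cmat (partial_transpose NA NB g)"
  have XCc: "?XC \<in> carrier_mat ?m ?m" using X_carrier[OF cm] by simp
  have Sc: "cmat (sympl (NA+NB)) \<in> carrier_mat ?m ?m" by (rule cmat_carrier[OF sympl_carrier])
  have "(cmat (sympl (NA+NB)) * ?XC) $$ (i,j) = (\<Sum>k<?m. cmat (sympl (NA+NB)) $$ (i,k) * ?XC $$ (k,j))"
    by (rule mm_index[OF Sc XCc i j])
  also have "\<dots> = (\<Sum>k<?m. if k = fp i then complex_of_real (sg i) * ?XC $$ (k,j) else 0)"
    using i by (intro sum.cong refl) (auto simp: sympl_fp)
  also have "\<dots> = complex_of_real (sg i) * ?XC $$ (fp i, j)" by (rule sum_single[OF fp_lt[OF i]])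
  finally have e: "(cmat (sympl (NA+NB)) * ?XC) $$ (i,j) = complex_of_real (sg i) * ?XC $$ (fp i, j)" .
  have dims: "dim_row (cmat (sympl (NA+NB)) * ?XC) = ?m" "dim_col (cmat (sympl (NA+NB)) * ?XC) = ?m"
    using mult_carrier_mat[OF Sc XCc] by auto
  have "AA NA NB g $$ (i,j) = \<i> * (cmat (sympl (NA+NB)) * ?XC) $$ (i,j)"
    unfolding i_sigma_mat_def by (rule index_smult_mat(1)) (use dims i j in auto)
  then show ?thesis unfolding e by (simp add: mult.assoc)
qed

lemma char_even_det: "det (AA NA NB g + x \<cdot>\<^sub>m 1\<^sub>m (2*(NA+NB))) = det (AA NA NB g + (-x) \<cdot>\<^sub>m 1\<^sub>m (2*(NA+NB)))"
proof -
  let ?m = "2*(NA+NB)" and ?A = "AA NA NB g" and ?XC = "cmat (partial_transpose NA NB g)"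
  let ?K = "Kmat (NA+NB)"
  define B where "B = ?A + x \<cdot>\<^sub>m 1\<^sub>m ?m"
  define C where "C = ?A + (-x) \<cdot>\<^sub>m 1\<^sub>m ?m"
  have Ac: "?A \<in> carrier_mat ?m ?m" by (rule A_carrier[OF cm])
  have Bc: "B \<in> carrier_mat ?m ?m" unfolding B_def using Ac by simp
  have Cc: "C \<in> carrier_mat ?m ?m" unfolding C_def using Ac by simp
  have Btc: "transpose_mat B \<in> carrier_mat ?m ?m" using Bc by simp
  have KBc: "?K * transpose_mat B \<in> carrier_mat ?m ?m" by (rule mult_carrier_mat[OF K_carrier Btc])
  have Bidx: "B $$ (i,j) = ?A $$ (i,j) + (if i = j then x else 0)" if "i < ?m" "j < ?m" for i j
    unfolding B_def using that Ac by simp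
  have Cidx: "C $$ (i,j) = ?A $$ (i,j) - (if i = j then x else 0)" if "i < ?m" "j < ?m" for i j
    unfolding C_def using that Ac by simp
  have M: "?K * transpose_mat B * ?K = - C"
  proof (rule eq_matI)
    fix i j assume "i < dim_row (- C)" "j < dim_col (- C)"
    then have i: "i < ?m" and j: "j < ?m" using Cc by auto
    have fi: "fp i < ?m" by (rule fp_lt[OF i])
    have fj: "fp j < ?m" by (rule fp_lt[OF j])
    have "(?K * transpose_mat B * ?K) $$ (i,j) = (?K * transpose_mat B) $$ (i, fp j) * (\<i> * complex_of_real (sg (fp j)))"
      by (rule NK_index[OF KBc i j])
    also have "(?K * transpose_mat B) $$ (i, fp j) = \<i> * complex_of_real (sg i) * transpose_mat B $$ (fp i, fp j)"
      by (rule KN_index[OF Btc i fj])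
    also have "transpose_mat B $$ (fp i, fp j) = B $$ (fp j, fp i)" using Bc fi fj by simp
    also have "B $$ (fp j, fp i) = ?A $$ (fp j, fp i) + (if i = j then x else 0)"
      using Bidx[OF fj fi] by (metis fp_fp)
    also have "?A $$ (fp j, fp i) = \<i> * complex_of_real (sg (fp j)) * ?XC $$ (j, fp i)"
      using A_index[OF fj fi] fp_fp by simp
    also have "?XC $$ (j, fp i) = ?XC $$ (fp i, j)" by (rule XC_sym[OF fi j])
    finally have "(?K * transpose_mat B * ?K) $$ (i,j) =
       \<i> * complex_of_real (sg i) * (\<i> * complex_of_real (- sg j) * ?XC $$ (fp i, j) + (if i = j then x else 0))
       * (\<i> * complex_of_real (- sg j))" by (simp add: sg_fp)
    also have "\<dots> = - (\<i> * complex_of_real (sg i) * ?XC $$ (fp i, j)) * (complex_of_real (sg j) * complex_of_real (sg j))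
        + (if i = j then x * (complex_of_real (sg i) * complex_of_real (sg j)) else 0)"
      by (simp add: algebra_simps)
    also have "\<dots> = - (\<i> * complex_of_real (sg i) * ?XC $$ (fp i, j)) + (if i = j then x else 0)"
      by (simp add: sgc)
    also have "\<dots> = (- C) $$ (i,j)" using Cidx[OF i j] A_index[OF i j] i j Cc by simp
    finally show "(?K * transpose_mat B * ?K) $$ (i,j) = (- C) $$ (i,j)" .
  qed (use Cc in auto)
  have "det (?K * transpose_mat B * ?K) = det (?K * transpose_mat B) * det ?K" by (rule det_mult[OF KBc K_carrier])
  also have "det (?K * transpose_mat B) = det ?K * det (transpose_mat B)" by (rule det_mult[OF K_carrier Btc])
  also have "det (transpose_mat B) = det B" by (rule det_transpose[OF Bc])
  finally have "det (- C) = det B * (det ?K * det ?K)" unfolding M by (simp add: ac_simps)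
  then have "det B = det (- C)" using det_K_sq by simp
  also have "\<dots> = det C" by (rule det_neg_even[OF Cc])
  finally show ?thesis unfolding B_def C_def .
qed

lemma char_even: "poly (char_poly (AA NA NB g)) y = poly (char_poly (AA NA NB g)) (- y)"
proof -
  let ?m = "2*(NA+NB)" and ?A = "AA NA NB g"
  have Ac: "?A \<in> carrier_mat ?m ?m" by (rule A_carrier[OF cm])
  have p: "poly (char_poly ?A) z = det (?A + (- z) \<cdot>\<^sub>m 1\<^sub>m ?m)" for z
  proof -
    have "poly (char_poly ?A) z = det (- (char_matrix ?A z))" by (rule char_poly_matrix[OF Ac])
    also have "\<dots> = det (char_matrix ?A z)"
    proof (rule det_neg_even[where n="NA+NB"])
      have dr: "dim_row ?A = ?m" using Ac by auto
      show "char_matrix ?A z \<in> carrier_mat ?m ?m"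
        unfolding char_matrix_def dr by (rule add_carrier_mat[OF smult_carrier_mat[OF one_carrier_mat]])
    qed
    finally show ?thesis unfolding char_matrix_def using Ac by simp
  qed
  show ?thesis unfolding p using char_even_det[of "-y"] by simp
qed

lemma prod_neg: "(\<Prod>a\<leftarrow>as. - (f a :: 'a :: comm_ring_1)) = (-1) ^ length as * (\<Prod>a\<leftarrow>as. f a)"
  by (induct as) auto

lemma count_uminus: "count (mset (map uminus as)) z = count (mset as) (- (z :: 'a :: ab_group_add))"
  by (induct as) auto

lemma count_mirror: assumes cp: "char_poly (AA NA NB g) = (\<Prod>a\<leftarrow>as. [:- a, 1:])"
  and len: "length as = 2*(NA+NB)"
  shows "count (mset as) z = count (mset as) (- z)"
proof -
  let ?Q = "\<Prod>a\<leftarrow>map uminus as. [:- a, 1:]"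
  have "poly ?Q y = poly (char_poly (AA NA NB g)) y" for y
  proof -
    have "poly ?Q y = (\<Prod>a\<leftarrow>as. a + y)" unfolding poly_lin_prod by (induct as) (auto simp: add.commute)
    also have "\<dots> = (\<Prod>a\<leftarrow>as. - (- y - a))" by simp
    also have "\<dots> = (-1) ^ length as * (\<Prod>a\<leftarrow>as. - y - a)" by (rule prod_neg)
    also have "(-1) ^ length as = (1::complex)" unfolding len by simp
    also have "(\<Prod>a\<leftarrow>as. - y - a) = poly (char_poly (AA NA NB g)) (- y)" unfolding cp poly_lin_prod ..
    also have "\<dots> = poly (char_poly (AA NA NB g)) y" using char_even[of y] by simp
    finally show ?thesis by simp
  qed
  then have "?Q = char_poly (AA NA NB g)" using poly_eq_poly_eq_iff by blast
  then have "order z ?Q = order z (\<Prod>a\<leftarrow>as. [:- a, 1:])" unfolding cp by simp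
  then have "count (mset (map uminus as)) z = count (mset as) z" unfolding order_lin_prod .
  then show ?thesis unfolding count_uminus by simp
qed

lemma prod_ge1: "(\<And>a. a \<in> set as \<Longrightarrow> 1 \<le> f a) \<Longrightarrow> 1 \<le> (\<Prod>a\<leftarrow>as. (f a :: real))"
proof (induct as)
  case Nil then show ?case by simp
next
  case (Cons a as)
  then have "1 \<le> f a" "1 \<le> (\<Prod>a\<leftarrow>as. f a)" by auto
  then show ?case by (simp add: one_le_mult_iff order_trans[OF _ mult_mono]) (metis mult_mono' mult_1 order_trans zero_le_one)
qed

lemma det_ge1: assumes cp: "char_poly (AA NA NB g) = (\<Prod>a\<leftarrow>as. [:- a, 1:])"
  shows "1 \<le> (\<Prod>a\<leftarrow>as. cmod a)"
proof -
  let ?m = "2*(NA+NB)" and ?G = "i_sigma_mat (NA+NB) g"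
  have Gc: "?G \<in> carrier_mat ?m ?m" by (rule isig_carrier[OF g_carrier[OF cm]])
  obtain bs where bs: "char_poly ?G = (\<Prod>a\<leftarrow>bs. [:- a, 1:])" using char_poly_factorized[OF Gc] by blast
  have "1 \<le> (\<Prod>b\<leftarrow>bs. cmod b)"
  proof (rule prod_ge1)
    fix b assume "b \<in> set bs"
    then have "poly (char_poly ?G) b = 0" unfolding bs root_lin_prod .
    then have "eigenvalue ?G b" using eigenvalue_root_char_poly[OF Gc] by simp
    then show "1 \<le> cmod b" by (rule G_eig_ge1[OF cm])
  qed
  also have "\<dots> = cmod (det ?G)" by (rule det_roots[OF Gc bs, symmetric])
  also have "det ?G = det (AA NA NB g)" by (rule det_AA[OF cm, symmetric])
  also have "cmod \<dots> = (\<Prod>a\<leftarrow>as. cmod a)" by (rule det_roots[OF A_carrier[OF cm] cp])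
  finally show ?thesis .
qed

end

lemma prod_cmod_mset: "(\<Prod>a\<leftarrow>as. cmod a) = prod_mset (image_mset cmod (mset as))"
  by (induct as) auto

lemma sub_eq_size: assumes "M \<subseteq># N" "size M = size N" shows "M = N"
proof (rule ccontr)
  assume "M \<noteq> N"
  then have "M \<subset># N" using assms(1) by (simp add: subset_mset.le_neq_trans)
  then have "size M < size N" by (rule mset_subset_size)
  then show False using assms(2) by simp
qed

context
  fixes NA NB :: nat and g :: "real mat"
  assumes cm: "g \<in> cov_mats (NA + NB)"
begin

lemma two_mode_exp_LL: assumes two: "NA + NB = 2" and lt: "exp (LL NA NB g) < 1"
  shows "exp (LL NA NB g) \<in> EE NA NB g"
proof -
  let ?m = "2*(NA+NB)" and ?A = "AA NA NB g"
  have Ac: "?A \<in> carrier_mat ?m ?m" by (rule A_carrier[OF cm])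
  obtain as where cp: "char_poly ?A = (\<Prod>a\<leftarrow>as. [:- a, 1:])" and len: "length as = ?m"
    using char_poly_factorized[OF Ac] by blast
  have len4: "size (mset as) = 4" using len two by simp
  have mir: "count (mset as) z = count (mset as) (- z)" for z by (rule count_mirror[OF cm cp len])
  have pge: "1 \<le> prod_mset (image_mset cmod (mset as))"
    using det_ge1[OF cm cp] unfolding prod_cmod_mset .
  have EEc: "r \<in> EE NA NB g \<longleftrightarrow> 0 < r \<and> complex_of_real r \<in> set as" for r
    unfolding symp_eigs_def mem_Collect_eq eigenvalue_root_char_poly[OF Ac] cp root_lin_prod ..
  have mult: "symp_mult (NA+NB) (partial_transpose NA NB g) r = count (mset as) (complex_of_real r)" for r
    unfolding symp_mult_def cp order_lin_prod ..
  define f where "f r = real (symp_mult (NA+NB) (partial_transpose NA NB g) r) * min (ln r) 0" for r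
  have LLf: "LL NA NB g = (\<Sum>r\<in>EE NA NB g. f r)" using log_neg_LL[OF cm] unfolding log_neg_def f_def by simp
  obtain r0 where r0: "r0 \<in> EE NA NB g" "r0 < 1"
  proof (rule ccontr)
    assume "\<not> thesis"
    then have "\<forall>r\<in>EE NA NB g. 1 \<le> r" using that by (meson not_le)
    then have "\<forall>r\<in>EE NA NB g. f r = 0" unfolding f_def by simp
    then have "LL NA NB g = 0" unfolding LLf by simp
    then show False using lt by simp
  qed
  have r0p: "0 < r0" and r0m: "complex_of_real r0 \<in> set as" using r0 EEc by auto
  let ?c = "complex_of_real r0"
  have cne: "?c \<noteq> - ?c" using r0p by (simp add: complex_eq_iff)
  have c1: "1 \<le> count (mset as) ?c" using r0m by simp
  have cnt1: "count (mset as) ?c = 1"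
  proof (rule ccontr)
    assume "count (mset as) ?c \<noteq> 1"
    then have c2: "2 \<le> count (mset as) ?c" using c1 by linarith
    let ?M = "{#?c, ?c, -?c, -?c#}"
    have "?M \<subseteq># mset as" unfolding subseteq_mset_def
    proof
      fix z
      show "count ?M z \<le> count (mset as) z"
      proof (cases "z = ?c")
        case True
        then show ?thesis using c2 cne by simp
      next
        case False
        note F = this
        show ?thesis
        proof (cases "z = - ?c")
          case True
          then show ?thesis using c2 mir[of ?c] F by simp
        next
          case False
          then show ?thesis using F by simp
        qed
      qed
    qed
    then have "?M = mset as" by (rule sub_eq_size) (use len two in simp)
    then have "prod_mset (image_mset cmod (mset as)) = prod_mset (image_mset cmod ?M)" by simp
    also have "\<dots> = r0^4" using r0p by (simp add: power4_eq_xxxx)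
    finally have "prod_mset (image_mset cmod (mset as)) = r0^4" .
    moreover have "r0^4 < 1" using r0 r0p by (simp add: power_less_one_iff)
    ultimately show False using pge by simp
  qed
  have others: "1 \<le> r" if r: "r \<in> EE NA NB g" "r \<noteq> r0" for r
  proof (rule ccontr)
    assume "\<not> 1 \<le> r"
    then have r1: "r < 1" by simp
    have rp: "0 < r" and rm: "complex_of_real r \<in> set as" using r EEc by auto
    let ?d = "complex_of_real r"
    have dne: "?d \<noteq> - ?d" using rp by (simp add: complex_eq_iff)
    have cd: "?c \<noteq> ?d" "?c \<noteq> - ?d" "- ?c \<noteq> ?d" "- ?c \<noteq> - ?d" using r(2) r0p rp by (auto simp: complex_eq_iff)
    let ?M = "{#?c, -?c, ?d, -?d#}"
    have "?M \<subseteq># mset as" unfolding subseteq_mset_def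
    proof
      fix z
      have a: "1 \<le> count (mset as) ?d" using rm by simp
      have b: "1 \<le> count (mset as) (- ?c)" using c1 mir[of ?c] by simp
      have b2: "1 \<le> count (mset as) (- ?d)" using a mir[of ?d] by simp
      consider "z = ?c" | "z = - ?c" | "z = ?d" | "z = - ?d" | "z \<noteq> ?c" "z \<noteq> - ?c" "z \<noteq> ?d" "z \<noteq> - ?d"
        by blast
      then show "count ?M z \<le> count (mset as) z"
      proof cases
        case 1 then show ?thesis using c1 cne cd by simp
      next
        case 2 then show ?thesis using b cne cd by simp
      next
        case 3 then show ?thesis using a dne cd by auto
      next
        case 4 then show ?thesis using b2 dne cd by auto
      next
        case 5 then show ?thesis by simp
      qed
    qed
    then have "?M = mset as" by (rule sub_eq_size) (use len two in simp)
    then have "prod_mset (image_mset cmod (mset as)) = prod_mset (image_mset cmod ?M)" by simp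
    also have "\<dots> = (r0 * r)^2" using r0p rp by (simp add: power2_eq_square)
    finally have "prod_mset (image_mset cmod (mset as)) = (r0 * r)^2" .
    moreover have "(r0 * r)^2 < 1"
    proof -
      have "r0 * r < 1 * 1" using r0 r0p rp r1 by (intro mult_strict_mono) auto
      then have "r0 * r < 1" by simp
      then show ?thesis using r0p rp by (simp add: power_less_one_iff)
    qed
    ultimately show False using pge by simp
  qed
  have "LL NA NB g = f r0 + (\<Sum>r\<in>EE NA NB g - {r0}. f r)"
    unfolding LLf using E_finite[OF cm] r0(1) by (simp add: sum.remove)
  also have "(\<Sum>r\<in>EE NA NB g - {r0}. f r) = 0"
  proof (rule sum.neutral, rule ballI)
    fix r assume "r \<in> EE NA NB g - {r0}"
    then have "1 \<le> r" using others by auto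
    then show "f r = 0" unfolding f_def by simp
  qed
  also have "f r0 = ln r0" unfolding f_def mult cnt1 using r0 r0p by simp
  finally show ?thesis using r0 r0p by simp
qed

end

theorem mainTheorem11:
  fixes NA NB :: nat and g :: "real mat"
  assumes PPT: "\<forall>g' \<in> cov_mats (NA + NB).
      g' \<in> sep_cov_mats NA NB \<longleftrightarrow>
      cpx_psd (2*(NA+NB)) (plus_i_sigma (NA+NB) (partial_transpose NA NB g'))"
    and cm: "g \<in> cov_mats (NA + NB)"
  shows "(\<forall>Z \<in> witnesses NA NB. 0 < mtrace (Z * g) \<and> mtrace (Z * g) < 1 \<longrightarrow>
            ln (1 / mtrace (Z * g)) \<le> log_neg NA NB g)
       \<and> (NA = 1 \<and> NB = 1 \<longrightarrow>
           (\<forall>Zmin \<in> witnesses NA NB.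
              (\<forall>Z \<in> witnesses NA NB. mtrace (Zmin * g) \<le> mtrace (Z * g)) \<and>
              0 < mtrace (Zmin * g) \<and> mtrace (Zmin * g) < 1 \<longrightarrow>
              log_neg NA NB g = ln (1 / mtrace (Zmin * g))))"
proof (intro conjI)
  show "\<forall>Z \<in> witnesses NA NB. 0 < mtrace (Z * g) \<and> mtrace (Z * g) < 1 \<longrightarrow>
            ln (1 / mtrace (Z * g)) \<le> log_neg NA NB g"
  proof (intro ballI impI)
    fix Z assume Z: "Z \<in> witnesses NA NB" and h: "0 < mtrace (Z * g) \<and> mtrace (Z * g) < 1"
    show "ln (1 / mtrace (Z * g)) \<le> log_neg NA NB g" using part1[OF PPT cm Z] h by blast
  qed
  show "NA = 1 \<and> NB = 1 \<longrightarrow>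
           (\<forall>Zmin \<in> witnesses NA NB.
              (\<forall>Z \<in> witnesses NA NB. mtrace (Zmin * g) \<le> mtrace (Z * g)) \<and>
              0 < mtrace (Zmin * g) \<and> mtrace (Zmin * g) < 1 \<longrightarrow>
              log_neg NA NB g = ln (1 / mtrace (Zmin * g)))"
  proof (intro impI ballI)
    fix Zmin assume two: "NA = 1 \<and> NB = 1" and Zm: "Zmin \<in> witnesses NA NB"
      and h: "(\<forall>Z \<in> witnesses NA NB. mtrace (Zmin * g) \<le> mtrace (Z * g)) \<and>
              0 < mtrace (Zmin * g) \<and> mtrace (Zmin * g) < 1"
    let ?mm = "mtrace (Zmin * g)"
    have b: "exp (LL NA NB g) \<le> ?mm" by (rule part1_bound[OF PPT cm Zm])
    have m1: "?mm < 1" using h by blast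
    have lt: "exp (LL NA NB g) < 1" using b m1 by linarith
    have "exp (LL NA NB g) \<in> EE NA NB g" by (rule two_mode_exp_LL[OF cm]) (use two lt in auto)
    then obtain Z where Z: "Z \<in> witnesses NA NB" and tz: "mtrace (Z * g) = exp (LL NA NB g)"
      using witness_exists[OF PPT cm] by blast
    have "?mm \<le> exp (LL NA NB g)" using h Z tz by auto
    then have eq: "?mm = exp (LL NA NB g)" using b by simp
    have "ln (1 / ?mm) = - LL NA NB g" unfolding eq by (simp add: ln_div)
    then show "log_neg NA NB g = ln (1 / ?mm)" using log_neg_LL[OF cm] by simp
  qed
qed

end
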